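(* Fix $y\in\mathbb{R}^d$, $k\in\mathbb{N}_0$ and measurable $g:\mathbb{R}^d\to\mathbb{R}$. Let $X,V$ be independent $\mathbb{R}^d$-valued random vectors, $Y=X+V$, where $P_V$ has a Lebesgue density $f_V\in C_0^k(\mathbb{R}^d;\mathbb{R})$ and $\varphi_V(\omega)\ne0$ for Lebesgue-a.e. $\omega$. Assume $\lambda_{g,V,y}(x)=g(x)f_V(y-x)\in\Xi^0(\mathbb{R}^d;\mathbb{C})$ and $\widetilde{\lambda}_{g,V,y}\in L^1(\mathbb{R}^d;\mathbb{C})$. Suppose there are finite signed Radon measures $\{\mu_\alpha:|\alpha|\le k\}$ on $\mathbb{R}^d$ such that \[ \mathcal{Q}_{g,V,y}(\omega)=\sum_{|\alpha|\le k}(i\omega)^\alpha\varphi_{\mu_\alpha}(\omega)\quad\text{for Lebesgue-a.e. }\omega,\qquad\varphi_\mu(\omega)=\int e^{i\omega^\top x}\,d\mu(x). \] Then for every $f\in\mathcal{A}_V(\mathbb{R}^d)$, \[ \mathcal{T}_{g,V,y}[f]=\sum_{|\alpha|\le k}\int_{\mathbb{R}^d}\partial^\alpha f(z)\,d\mu_\alpha(z), \] and in particular, whenever $f_Y(y)>0$, \[ \mathbb{E}[g(X)\mid Y=y]=\frac{1}{f_Y(y)}\sum_{|\alpha|\le k}\int_{\mathbb{R}^d}\partial^\alpha f_Y(z)\,d\mu_\alpha(z). \]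
   Context: $\widetilde\psi(\omega)=\int e^{i\omega^\top x}\psi(x)dx$; $\varphi_V(\omega)=\mathbb{E}[e^{i\omega^\top V}]$. $(i\omega)^\alpha=\prod_j(i\omega_j)^{\alpha_j}$ for a multi-index $\alpha$. $C_0^k$: $C^k$ functions whose derivatives of order $\le k$ vanish at infinity; $\Xi^0=C_0\cap L^1$. $\mathcal{Q}_{g,V,y}(\omega)=\widetilde{\lambda}_{g,V,y}(\omega)/\varphi_V(-\omega)$ where $\varphi_V(-\omega)\ne0$, and $0$ otherwise. $\mathcal{A}_V(\mathbb{R}^d)=\{f_V*\mu:\mu\text{ finite signed Radon measure}\}$ (representing measure unique) with norm $\|f_V*\mu\|_{\mathcal{A}_V}=\|\mu\|_{TV}$; $\mathcal{T}_{g,V,y}$ is the unique continuous linear functional on $\mathcal{A}_V$ with $\mathcal{T}_{g,V,y}[f_V*\mu]=\int\lambda_{g,V,y}\,d\mu$. $f_Y=f_V*P_X$ and $\mathbb{E}[g(X)\mid Y=y]=f_Y(y)^{-1}\int g(x)f_V(y-x)dP_X(x)$. *)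

theory Defs
  imports "HOL-Probability.Probability"
begin

type_synonym 'n multi_index = "'n \<Rightarrow> nat"

definition mi_abs :: "('n::finite) multi_index \<Rightarrow> nat" where
  "mi_abs \<alpha> = (\<Sum>j\<in>UNIV. \<alpha> j)"

definition multi_indices :: "nat \<Rightarrow> ('n::finite) multi_index set" where
  "multi_indices k = {\<alpha>. mi_abs \<alpha> \<le> k}"

definition partial :: "'n::finite \<Rightarrow> (real^'n \<Rightarrow> real) \<Rightarrow> real^'n \<Rightarrow> real" where
  "partial j f x = deriv (\<lambda>t. f (x + t *\<^sub>R axis j 1)) 0"

fun iter_partial :: "('n::finite) list \<Rightarrow> (real^'n \<Rightarrow> real) \<Rightarrow> real^'n \<Rightarrow> real" where
  "iter_partial [] f = f"
| "iter_partial (j # js) f = partial j (iter_partial js f)"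

definition coord_list :: "('n::finite) list" where
  "coord_list = (SOME xs. distinct xs \<and> set xs = UNIV)"

definition mderiv :: "('n::finite) multi_index \<Rightarrow> (real^'n \<Rightarrow> real) \<Rightarrow> real^'n \<Rightarrow> real" where
  "mderiv \<alpha> f = iter_partial (concat (map (\<lambda>j. replicate (\<alpha> j) j) coord_list)) f"

definition i_omega_pow :: "('n::finite) multi_index \<Rightarrow> real^'n \<Rightarrow> complex" where
  "i_omega_pow \<alpha> \<omega> = (\<Prod>j\<in>UNIV. (\<i> * complex_of_real (\<omega> $ j)) ^ (\<alpha> j))"

definition C0k :: "nat \<Rightarrow> (real^'n::finite \<Rightarrow> real) \<Rightarrow> bool" where
  "C0k k f \<longleftrightarrow>
     (\<forall>js::'n list. length js < k \<longrightarrow> (\<forall>x. iter_partial js f differentiable (at x))) \<and>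
     (\<forall>js::'n list. length js \<le> k \<longrightarrow>
        continuous_on UNIV (iter_partial js f) \<and> (iter_partial js f \<longlongrightarrow> 0) at_infinity)"

section \<open>Finite signed measures, represented as differences of finite Borel measures\<close>

definition fin_signed :: "'a::topological_space measure \<Rightarrow> 'a measure \<Rightarrow> bool" where
  "fin_signed Mp Mn \<longleftrightarrow> sets Mp = sets borel \<and> sets Mn = sets borel \<and>
     finite_measure Mp \<and> finite_measure Mn"

definition sint :: "'a measure \<Rightarrow> 'a measure \<Rightarrow> ('a \<Rightarrow> real) \<Rightarrow> real" where
  "sint Mp Mn h = (\<integral>x. h x \<partial>Mp) - (\<integral>x. h x \<partial>Mn)"

definition schar :: "(real^'n::finite) measure \<Rightarrow> (real^'n) measure \<Rightarrow> real^'n \<Rightarrow> complex" where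
  "schar Mp Mn \<omega> = (\<integral>x. cis (\<omega> \<bullet> x) \<partial>Mp) - (\<integral>x. cis (\<omega> \<bullet> x) \<partial>Mn)"

definition charf :: "(real^'n::finite) measure \<Rightarrow> real^'n \<Rightarrow> complex" where
  "charf P \<omega> = (\<integral>x. cis (\<omega> \<bullet> x) \<partial>P)"

definition fourier :: "(real^'n::finite \<Rightarrow> complex) \<Rightarrow> real^'n \<Rightarrow> complex" where
  "fourier \<psi> \<omega> = (\<integral>x. cis (\<omega> \<bullet> x) * \<psi> x \<partial>lborel)"

definition conv_signed :: "(real^'n::finite \<Rightarrow> real) \<Rightarrow> (real^'n) measure \<Rightarrow> (real^'n) measure \<Rightarrow> real^'n \<Rightarrow> real" where
  "conv_signed f Mp Mn z = sint Mp Mn (\<lambda>x. f (z - x))"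

definition conv_meas :: "(real^'n::finite \<Rightarrow> real) \<Rightarrow> (real^'n) measure \<Rightarrow> real^'n \<Rightarrow> real" where
  "conv_meas f P z = (\<integral>x. f (z - x) \<partial>P)"

definition lam :: "(real^'n::finite \<Rightarrow> real) \<Rightarrow> (real^'n \<Rightarrow> real) \<Rightarrow> real^'n \<Rightarrow> real^'n \<Rightarrow> real" where
  "lam g fV y x = g x * fV (y - x)"

definition Qfun :: "(real^'n::finite \<Rightarrow> real) \<Rightarrow> (real^'n \<Rightarrow> real) \<Rightarrow> (real^'n) measure \<Rightarrow> real^'n \<Rightarrow> real^'n \<Rightarrow> complex" where
  "Qfun g fV PV y \<omega> =
     (if charf PV (- \<omega>) \<noteq> 0
      then fourier (\<lambda>x. complex_of_real (lam g fV y x)) \<omega> / charf PV (- \<omega>) else 0)"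

text \<open>E[g(X) | Y = y] := f_Y(y)^{-1} \<integral> g(x) f_V(y - x) dP_X(x), with f_Y = f_V * P_X.\<close>
definition cond_exp_at :: "(real^'n::finite \<Rightarrow> real) \<Rightarrow> (real^'n \<Rightarrow> real) \<Rightarrow> (real^'n) measure \<Rightarrow> real^'n \<Rightarrow> real" where
  "cond_exp_at g fV PX y = (\<integral>x. g x * fV (y - x) \<partial>PX) / conv_meas fV PX y"

end

theory Submission
  imports Defs
begin

lemma mvt_quot:
  fixes \<phi> \<phi>' :: "real \<Rightarrow> real"
  assumes h: "h \<noteq> 0" and der: "\<And>t. (\<phi> has_real_derivative \<phi>' t) (at t)"
  shows "\<exists>z. \<bar>z\<bar> \<le> \<bar>h\<bar> \<and> (\<phi> h - \<phi> 0) / h = \<phi>' z"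
proof (cases "h > 0")
  case True
  from MVT2[OF True der] obtain z where "0 < z" "z < h" "\<phi> h - \<phi> 0 = (h - 0) * \<phi>' z" by blast
  then show ?thesis using True by (intro exI[of _ z]) auto
next
  case False
  with h have hn: "h < 0" by simp
  from MVT2[OF hn der] obtain z where "h < z" "z < 0" "\<phi> 0 - \<phi> h = (0 - h) * \<phi>' z" by blast
  then show ?thesis using hn by (intro exI[of _ z]) (auto simp: field_simps)
qed

lemma diff_under_integral:
  fixes F D :: "'v::real_normed_vector \<Rightarrow> 'b \<Rightarrow> real" and e :: 'v
  assumes der: "\<And>u x. x \<in> space M \<Longrightarrow> ((\<lambda>t. F (u + t *\<^sub>R e) x) has_real_derivative D u x) (at 0)"
    and cont: "\<And>u x. x \<in> space M \<Longrightarrow> isCont (\<lambda>t. D (u + t *\<^sub>R e) x) 0"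
    and bound: "\<And>u x. x \<in> space M \<Longrightarrow> \<bar>D u x\<bar> \<le> b x"
    and intb: "integrable M b"
    and Fint: "\<And>u. integrable M (F u)"
    and Dmeas: "\<And>u. D u \<in> borel_measurable M"
  shows "((\<lambda>t. \<integral>x. F (u + t *\<^sub>R e) x \<partial>M) has_real_derivative (\<integral>x. D u x \<partial>M)) (at 0)"
proof -
  define q where "q t x = (F (u + t *\<^sub>R e) x - F u x) / t" for t x
  have der2: "((\<lambda>t. F (u + t *\<^sub>R e) x) has_real_derivative D (u + s *\<^sub>R e) x) (at s)"
    if x: "x \<in> space M" for x s
  proof -
    have "((\<lambda>t. F (u + s *\<^sub>R e + t *\<^sub>R e) x) has_real_derivative D (u + s *\<^sub>R e) x) (at 0)"
      using der[OF x] .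
    then have "((\<lambda>t. F (u + (t + s) *\<^sub>R e) x) has_real_derivative D (u + s *\<^sub>R e) x) (at 0)"
      by (simp add: scaleR_add_left algebra_simps)
    then show ?thesis
      using DERIV_shift[of "\<lambda>t. F (u + t *\<^sub>R e) x" "D (u + s *\<^sub>R e) x" 0 s] by simp
  qed
  have mvt: "\<exists>z. \<bar>z\<bar> \<le> \<bar>t\<bar> \<and> q t x = D (u + z *\<^sub>R e) x" if "t \<noteq> 0" "x \<in> space M" for t x
    using mvt_quot[OF that(1) der2[OF that(2)]] by (simp add: q_def)
  have "((\<lambda>t. ((\<integral>x. F (u + t *\<^sub>R e) x \<partial>M) - (\<integral>x. F (u + 0 *\<^sub>R e) x \<partial>M)) / (t - 0)) \<longlongrightarrow> (\<integral>x. D u x \<partial>M)) (at 0)"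
    unfolding tendsto_at_iff_sequentially
  proof (intro allI impI)
    fix X :: "nat \<Rightarrow> real"
    assume X0: "\<forall>i. X i \<in> UNIV - {0}" and X: "X \<longlonglongrightarrow> 0"
    have eqn: "((\<integral>x. F (u + X n *\<^sub>R e) x \<partial>M) - (\<integral>x. F (u + 0 *\<^sub>R e) x \<partial>M)) / (X n - 0) = (\<integral>x. q (X n) x \<partial>M)" for n
      unfolding q_def using Fint by simp
    have "(\<lambda>n. \<integral>x. q (X n) x \<partial>M) \<longlonglongrightarrow> (\<integral>x. D u x \<partial>M)"
    proof (rule integral_dominated_convergence[where w=b])
      show "D u \<in> borel_measurable M" by (rule Dmeas)
      show "(\<lambda>x. q (X n) x) \<in> borel_measurable M" for n
        unfolding q_def using Fint by (intro borel_measurable_divide borel_measurable_diff) auto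
      show "integrable M b" by (rule intb)
      show "AE x in M. (\<lambda>n. q (X n) x) \<longlonglongrightarrow> D u x"
      proof (rule AE_I2, rule LIMSEQ_I)
        fix x r assume x: "x \<in> space M" and r: "(0::real) < r"
        from cont[of x u, OF x, unfolded isCont_def, THEN tendstoD, OF r]
        obtain d where d: "d > 0" "\<And>t. t \<noteq> 0 \<Longrightarrow> dist t 0 < d \<Longrightarrow> dist (D (u + t *\<^sub>R e) x) (D (u + 0 *\<^sub>R e) x) < r"
          by (auto simp: eventually_at)
        from X[THEN LIMSEQ_D, OF d(1)] obtain N where N: "\<And>n. n \<ge> N \<Longrightarrow> norm (X n - 0) < d" by blast
        show "\<exists>N. \<forall>n\<ge>N. norm (q (X n) x - D u x) < r"
        proof (intro exI allI impI)
          fix n assume "n \<ge> N"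
          with N have Xn: "\<bar>X n\<bar> < d" by simp
          from mvt[OF _ x, of "X n"] X0 obtain z where z: "\<bar>z\<bar> \<le> \<bar>X n\<bar>" "q (X n) x = D (u + z *\<^sub>R e) x"
            by auto
          show "norm (q (X n) x - D u x) < r"
          proof (cases "z = 0")
            case True then show ?thesis using z r by simp
          next
            case False
            then show ?thesis using d(2)[of z] z Xn by (simp add: dist_real_def)
          qed
        qed
      qed
      show "AE x in M. norm (q (X n) x) \<le> b x" for n
      proof (rule AE_I2)
        fix x assume x: "x \<in> space M"
        from mvt[OF _ x, of "X n"] X0 obtain z where z: "q (X n) x = D (u + z *\<^sub>R e) x"
          by auto
        then show "norm (q (X n) x) \<le> b x" using bound[OF x] by simp
      qed
    qed
    then show "((\<lambda>t. ((\<integral>x. F (u + t *\<^sub>R e) x \<partial>M) - (\<integral>x. F (u + 0 *\<^sub>R e) x \<partial>M)) / (t - 0)) \<circ> X) \<longlonglongrightarrow> (\<integral>x. D u x \<partial>M)"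
      unfolding o_def eqn .
  qed
  then show ?thesis
    by (simp add: has_field_derivative_iff)
qed


definition good :: "nat \<Rightarrow> (real^'n::finite \<Rightarrow> real) \<Rightarrow> bool" where
  "good k f \<longleftrightarrow>
     (\<forall>js::'n list. length js \<le> k \<longrightarrow> continuous_on UNIV (iter_partial js f) \<and> bounded (range (iter_partial js f))) \<and>
     (\<forall>js::'n list. length js < k \<longrightarrow> (\<forall>x. iter_partial js f differentiable (at x)))"

lemma cont_vanish_bounded:
  fixes f :: "'a::euclidean_space \<Rightarrow> real"
  assumes c: "continuous_on UNIV f" and l: "(f \<longlongrightarrow> 0) at_infinity"
  shows "bounded (range f)"
proof -
  from l have "eventually (\<lambda>x. dist (f x) 0 < 1) at_infinity"
    by (rule tendstoD) simp
  then obtain R where R: "\<And>x. norm x \<ge> R \<Longrightarrow> \<bar>f x\<bar> < 1"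
    by (auto simp: eventually_at_infinity)
  have "compact (f ` cball 0 R)"
    by (intro compact_continuous_image continuous_on_subset[OF c]) auto
  then have "bounded (f ` cball 0 R)" by (rule compact_imp_bounded)
  then obtain B where B0: "\<forall>y\<in>f ` cball 0 R. norm y \<le> B"
    by (auto simp: bounded_iff)
  then have B: "\<And>x. x \<in> cball 0 R \<Longrightarrow> \<bar>f x\<bar> \<le> B" by auto
  show ?thesis
    unfolding bounded_iff
  proof (intro exI ballI)
    fix y assume "y \<in> range f"
    then obtain x where y: "y = f x" by auto
    show "norm y \<le> max B 1"
    proof (cases "norm x \<ge> R")
      case True with R[of x] y show ?thesis by simp
    next
      case False then have "x \<in> cball 0 R" by simp
      with B[of x] y show ?thesis by simp
    qed
  qed
qed

lemma C0k_good: "C0k k f \<Longrightarrow> good k f"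
  unfolding C0k_def good_def using cont_vanish_bounded by blast

lemma dir_deriv:
  fixes f :: "'a::real_normed_vector \<Rightarrow> real"
  assumes "f differentiable (at p)"
  shows "((\<lambda>t. f (p + t *\<^sub>R e)) has_real_derivative deriv (\<lambda>t. f (p + t *\<^sub>R e)) 0) (at 0)"
proof -
  have "(\<lambda>t::real. p + t *\<^sub>R e) differentiable (at 0)"
    by (intro derivative_intros)
  moreover have "f differentiable (at (p + 0 *\<^sub>R e))" using assms by simp
  ultimately have "(\<lambda>t. f (p + t *\<^sub>R e)) differentiable (at 0)"
    by (rule differentiable_chain_at[unfolded o_def])
  then show ?thesis
    by (simp add: DERIV_deriv_iff_real_differentiable)
qed

lemma partial_has_deriv:
  fixes f :: "real^'n::finite \<Rightarrow> real"
  assumes "f differentiable (at p)"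
  shows "((\<lambda>t. f (p + t *\<^sub>R axis j 1)) has_real_derivative partial j f p) (at 0)"
  unfolding partial_def by (rule dir_deriv[OF assms])

lemma meas_sets_borel:
  assumes "sets N = sets borel" "h \<in> borel_measurable borel"
  shows "h \<in> borel_measurable N"
  using assms by (simp cong: measurable_cong_sets)

lemma bounded_range_abs:
  assumes "bounded (range (f :: 'a \<Rightarrow> real))"
  obtains B where "\<And>x. \<bar>f x\<bar> \<le> B"
  using assms by (auto simp: bounded_iff)

lemma fin_int_bounded:
  assumes "finite_measure N" "sets N = sets borel" "continuous_on UNIV h" "bounded (range (h :: 'a::euclidean_space \<Rightarrow> real))"
  shows "integrable N (\<lambda>x. h (u - x))"
proof -
  interpret finite_measure N by fact
  obtain B where B: "\<And>x. \<bar>h x\<bar> \<le> B" using bounded_range_abs[OF assms(4)] by blast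
  have m: "(\<lambda>x. h (u - x)) \<in> borel_measurable borel"
    by (intro borel_measurable_continuous_onI continuous_on_compose2[OF assms(3)] continuous_intros) auto
  show ?thesis
    by (rule integrable_const_bound[where B=B]) (auto simp: B meas_sets_borel[OF assms(2) m])
qed

lemma partial_conv_single:
  fixes g :: "real^'n::finite \<Rightarrow> real"
  assumes N: "finite_measure N" "sets N = sets borel"
    and gd: "\<And>x. g differentiable (at x)"
    and gc: "continuous_on UNIV g" "bounded (range g)"
    and pc: "continuous_on UNIV (partial j g)" "bounded (range (partial j g))"
  shows "((\<lambda>t. \<integral>x. g (u + t *\<^sub>R axis j 1 - x) \<partial>N) has_real_derivative (\<integral>x. partial j g (u - x) \<partial>N)) (at 0)"
proof -
  interpret finite_measure N by fact
  obtain B where B: "\<And>x. \<bar>partial j g x\<bar> \<le> B" using bounded_range_abs[OF pc(2)] by blast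
  have "((\<lambda>t. \<integral>x. (\<lambda>u x. g (u - x)) (u + t *\<^sub>R axis j 1) x \<partial>N) has_real_derivative (\<integral>x. (\<lambda>u x. partial j g (u - x)) u x \<partial>N)) (at 0)"
  proof (rule diff_under_integral[where b="\<lambda>_. B"])
    fix u x
    have "((\<lambda>t. g ((u - x) + t *\<^sub>R axis j 1)) has_real_derivative partial j g (u - x)) (at 0)"
      by (rule partial_has_deriv[OF gd])
    then show "((\<lambda>t. (\<lambda>u x. g (u - x)) (u + t *\<^sub>R axis j 1) x) has_real_derivative (\<lambda>u x. partial j g (u - x)) u x) (at 0)"
      by (simp add: algebra_simps)
    show "isCont (\<lambda>t. (\<lambda>u x. partial j g (u - x)) (u + t *\<^sub>R axis j 1) x) 0"
      by (intro continuous_on_interior[of UNIV] continuous_on_compose2[OF pc(1)] continuous_intros) auto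
    show "\<bar>(\<lambda>u x. partial j g (u - x)) u x\<bar> \<le> B" by (simp add: B)
  next
    show "integrable N (\<lambda>_. B)" by simp
    show "integrable N ((\<lambda>u x. g (u - x)) u)" for u
      using fin_int_bounded[OF N gc] by simp
    show "(\<lambda>u x. partial j g (u - x)) u \<in> borel_measurable N" for u
      using borel_measurable_integrable[OF fin_int_bounded[OF N pc]] by simp
  qed
  then show ?thesis by simp
qed

lemma conv_iter:
  fixes f :: "real^'n::finite \<Rightarrow> real"
  assumes N: "fin_signed N1 N2" and g: "good k f" and len: "length js \<le> k"
  shows "iter_partial js (conv_signed f N1 N2) = conv_signed (iter_partial js f) N1 N2"
  using len
proof (induction js)
  case Nil then show ?case by simp
next
  case (Cons j js)
  then have IH: "iter_partial js (conv_signed f N1 N2) = conv_signed (iter_partial js f) N1 N2" by simp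
  let ?g = "iter_partial js f"
  have gd: "\<And>x. ?g differentiable (at x)" using g Cons.prems by (auto simp: good_def)
  have gc: "continuous_on UNIV ?g" "bounded (range ?g)" using g Cons.prems by (auto simp: good_def)
  have pc: "continuous_on UNIV (partial j ?g)" "bounded (range (partial j ?g))"
    using g Cons.prems spec[OF conjunct1[OF g[unfolded good_def]], of "j # js"] by auto
  have N1: "finite_measure N1" "sets N1 = sets borel" and N2: "finite_measure N2" "sets N2 = sets borel"
    using N by (auto simp: fin_signed_def)
  show ?case
  proof
    fix u
    have "((\<lambda>t. conv_signed ?g N1 N2 (u + t *\<^sub>R axis j 1)) has_real_derivative
        conv_signed (partial j ?g) N1 N2 u) (at 0)"
      unfolding conv_signed_def sint_def
      by (intro DERIV_diff partial_conv_single[OF N1 gd gc pc] partial_conv_single[OF N2 gd gc pc])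
    then show "iter_partial (j # js) (conv_signed f N1 N2) u = conv_signed (iter_partial (j # js) f) N1 N2 u"
      by (simp add: IH partial_def DERIV_imp_deriv)
  qed
qed


definition plist :: "'n list \<Rightarrow> real^'n::finite \<Rightarrow> complex" where
  "plist js w = prod_list (map (\<lambda>j. \<i> * complex_of_real (w $ j)) js)"

lemma plist_Nil[simp]: "plist [] w = 1" by (simp add: plist_def)
lemma plist_Cons[simp]: "plist (j # js) w = \<i> * complex_of_real (w $ j) * plist js w"
  by (simp add: plist_def)

lemma plist_meas[measurable]: "plist js \<in> borel_measurable borel"
  by (induction js) (simp_all)

lemma plist_norm: "norm (plist js w) \<le> (norm w)^(length js)"
proof (induction js)
  case (Cons j js)
  have "norm (plist (j # js) w) = \<bar>w $ j\<bar> * norm (plist js w)"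
    by (simp add: norm_mult)
  also have "\<dots> \<le> norm w * (norm w)^(length js)"
    by (intro mult_mono Cons.IH component_le_norm_cart) auto
  finally show ?case by simp
qed simp

lemma pow_le_one_plus: "m \<le> k \<Longrightarrow> (norm (w::'a::real_normed_vector))^m \<le> (1 + norm w)^k"
proof -
  assume "m \<le> k"
  have "(norm w)^m \<le> (1 + norm w)^m" by (intro power_mono) auto
  also have "\<dots> \<le> (1 + norm w)^k" using \<open>m \<le> k\<close> by (intro power_increasing) auto
  finally show ?thesis .
qed

lemma Re_cis_mult: "Re (cis x * c) = cos x * Re c - sin x * Im c"
  by (simp add: cis.code)

lemma deriv_Re_cis:
  "((\<lambda>t. Re (cis (a + t * b) * c)) has_real_derivative Re (cis a * (\<i> * complex_of_real b) * c)) (at 0)"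
proof -
  have "((\<lambda>t. cos (a + t * b) * Re c - sin (a + t * b) * Im c) has_real_derivative
     (- sin (a + 0 * b) * b) * Re c - (cos (a + 0 * b) * b) * Im c) (at 0)"
    by (intro derivative_eq_intros refl) auto
  moreover have "(- sin (a + 0 * b) * b) * Re c - (cos (a + 0 * b) * b) * Im c = Re (cis a * (\<i> * complex_of_real b) * c)"
    by (simp add: cis.code algebra_simps)
  ultimately show ?thesis by (simp add: Re_cis_mult)
qed

lemma fourier_iter:
  fixes q :: "real^'n::finite \<Rightarrow> complex"
  assumes qm[measurable]: "q \<in> borel_measurable borel"
    and dom: "integrable lborel (\<lambda>w. (1 + norm w)^k * norm (q w))"
    and len: "length js \<le> k"
  shows "iter_partial js (\<lambda>u. \<integral>w. Re (cis (w \<bullet> u) * q w) \<partial>lborel) =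
         (\<lambda>u. \<integral>w. Re (cis (w \<bullet> u) * plist js w * q w) \<partial>lborel)"
  using len
proof (induction js)
  case Nil then show ?case by simp
next
  case (Cons j js)
  then have IH: "iter_partial js (\<lambda>u. \<integral>w. Re (cis (w \<bullet> u) * q w) \<partial>lborel) =
         (\<lambda>u. \<integral>w. Re (cis (w \<bullet> u) * plist js w * q w) \<partial>lborel)" by simp
  have lj: "length js < k" using Cons.prems by simp
  let ?b = "\<lambda>w. (1 + norm w)^k * norm (q w)"
  have bnd: "\<bar>Re (cis x * plist js' w * q w)\<bar> \<le> ?b w" if "length js' \<le> k" for x js' w
  proof -
    have "\<bar>Re (cis x * plist js' w * q w)\<bar> \<le> norm (cis x * plist js' w * q w)" by (rule abs_Re_le_cmod)
    also have "\<dots> = norm (plist js' w) * norm (q w)" by (simp add: norm_mult)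
    also have "\<dots> \<le> (1 + norm w)^k * norm (q w)"
      using order_trans[OF plist_norm pow_le_one_plus[OF that]] by (intro mult_right_mono) auto
    finally show ?thesis .
  qed
  show ?case
  proof
    fix u
    have "((\<lambda>t. \<integral>w. (\<lambda>u w. Re (cis (w \<bullet> u) * plist js w * q w)) (u + t *\<^sub>R axis j 1) w \<partial>lborel) has_real_derivative
        (\<integral>w. (\<lambda>u w. Re (cis (w \<bullet> u) * plist (j # js) w * q w)) u w \<partial>lborel)) (at 0)"
    proof (rule diff_under_integral[where b="?b"])
      fix u w
      have "((\<lambda>t. Re (cis (w \<bullet> u + t * (w $ j)) * (plist js w * q w))) has_real_derivative
          Re (cis (w \<bullet> u) * (\<i> * complex_of_real (w $ j)) * (plist js w * q w))) (at 0)"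
        by (rule deriv_Re_cis)
      then show "((\<lambda>t. (\<lambda>u w. Re (cis (w \<bullet> u) * plist js w * q w)) (u + t *\<^sub>R axis j 1) w) has_real_derivative
          (\<lambda>u w. Re (cis (w \<bullet> u) * plist (j # js) w * q w)) u w) (at 0)"
        by (simp add: inner_add_right cart_eq_inner_axis[symmetric] inner_commute mult_ac)
      show "isCont (\<lambda>t. (\<lambda>u w. Re (cis (w \<bullet> u) * plist (j # js) w * q w)) (u + t *\<^sub>R axis j 1) w) 0"
        by (simp only: mult.assoc Re_cis_mult) (intro continuous_intros)
      show "\<bar>(\<lambda>u w. Re (cis (w \<bullet> u) * plist (j # js) w * q w)) u w\<bar> \<le> ?b w"
        using bnd[of "j # js"] Cons.prems by simp
    next
      show "integrable lborel ?b" by (rule dom)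
      show "integrable lborel ((\<lambda>u w. Re (cis (w \<bullet> u) * plist js w * q w)) u)" for u
      proof (rule Bochner_Integration.integrable_bound[OF dom])
        show "AE w in lborel. norm ((\<lambda>u w. Re (cis (w \<bullet> u) * plist js w * q w)) u w) \<le> norm (?b w)"
        proof (rule AE_I2)
          fix w
          have 1: "\<bar>Re (cis (w \<bullet> u) * plist js w * q w)\<bar> \<le> ?b w"
            using lj by (intro bnd) simp
          have 2: "?b w \<ge> 0" by simp
          show "norm ((\<lambda>u w. Re (cis (w \<bullet> u) * plist js w * q w)) u w) \<le> norm (?b w)"
            using 1 2 by (simp only: real_norm_def abs_of_nonneg)
        qed
      qed simp
      show "(\<lambda>u w. Re (cis (w \<bullet> u) * plist (j # js) w * q w)) u \<in> borel_measurable lborel" for u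
        by simp
    qed
    then have "((\<lambda>t. \<integral>w. Re (cis (w \<bullet> (u + t *\<^sub>R axis j 1)) * plist js w * q w) \<partial>lborel) has_real_derivative
        (\<integral>w. Re (cis (w \<bullet> u) * plist (j # js) w * q w) \<partial>lborel)) (at 0)" by simp
    then show "iter_partial (j # js) (\<lambda>u. \<integral>w. Re (cis (w \<bullet> u) * q w) \<partial>lborel) u =
         (\<integral>w. Re (cis (w \<bullet> u) * plist (j # js) w * q w) \<partial>lborel)"
      unfolding iter_partial.simps partial_def IH by (rule DERIV_imp_deriv)
  qed
qed


lemma coord_list_prop: "distinct (coord_list :: ('n::finite) list) \<and> set (coord_list :: 'n list) = UNIV"
proof -
  obtain xs :: "'n list" where "distinct xs \<and> set xs = UNIV"
    using finite_distinct_list[OF finite_class.finite_UNIV] by metis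
  then show ?thesis unfolding coord_list_def by (rule someI)
qed

definition mlist :: "('n::finite) multi_index \<Rightarrow> 'n list" where
  "mlist \<alpha> = concat (map (\<lambda>j. replicate (\<alpha> j) j) coord_list)"

lemma mderiv_mlist: "mderiv \<alpha> f = iter_partial (mlist \<alpha>) f"
  by (simp add: mderiv_def mlist_def)

lemma length_mlist: "length (mlist \<alpha>) = mi_abs \<alpha>"
proof -
  have "length (mlist \<alpha>) = sum_list (map \<alpha> coord_list)"
    by (simp add: mlist_def length_concat o_def)
  also have "\<dots> = sum \<alpha> (set coord_list)"
    by (intro sum_list_distinct_conv_sum_set conjunct1[OF coord_list_prop])
  finally show ?thesis by (simp add: mi_abs_def conjunct2[OF coord_list_prop])
qed

lemma length_mlist_le: "\<alpha> \<in> multi_indices k \<Longrightarrow> length (mlist \<alpha>) \<le> k"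
  by (simp add: length_mlist multi_indices_def)

lemma plist_append: "plist (xs @ ys) w = plist xs w * plist ys w"
  by (simp add: plist_def)

lemma plist_replicate: "plist (replicate n j) w = (\<i> * complex_of_real (w $ j))^n"
  by (induction n) auto

lemma plist_concat: "plist (concat xss) w = prod_list (map (\<lambda>xs. plist xs w) xss)"
  by (induction xss) (auto simp: plist_append)

lemma plist_mlist: "plist (mlist \<alpha>) w = i_omega_pow \<alpha> w"
proof -
  have "plist (mlist \<alpha>) w = prod_list (map (\<lambda>j. (\<i> * complex_of_real (w $ j))^(\<alpha> j)) coord_list)"
    by (simp add: mlist_def plist_concat o_def plist_replicate)
  also have "\<dots> = (\<Prod>j\<in>set coord_list. (\<i> * complex_of_real (w $ j))^(\<alpha> j))"
    by (intro prod.distinct_set_conv_list[symmetric] conjunct1[OF coord_list_prop])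
  finally show ?thesis by (simp add: i_omega_pow_def conjunct2[OF coord_list_prop])
qed

lemma finite_multi_indices: "finite (multi_indices k :: ('n::finite) multi_index set)"
proof -
  have "multi_indices k \<subseteq> {\<alpha>::'n multi_index. \<forall>j. \<alpha> j \<in> {..k}}"
  proof
    fix \<alpha> :: "'n multi_index" assume "\<alpha> \<in> multi_indices k"
    then have s: "(\<Sum>j\<in>UNIV. \<alpha> j) \<le> k" by (simp add: multi_indices_def mi_abs_def)
    have "\<alpha> j \<le> k" for j
      using member_le_sum[of j UNIV \<alpha>] s by simp
    then show "\<alpha> \<in> {\<alpha>::'n multi_index. \<forall>j. \<alpha> j \<in> {..k}}" by simp
  qed
  moreover have "finite {\<alpha>::'n multi_index. \<forall>j. \<alpha> j \<in> {..k}}"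
    using finite_PiE[OF finite_class.finite_UNIV, of "\<lambda>_. {..k}"] by (simp add: PiE_UNIV_domain Pi_def)
  ultimately show ?thesis by (rule finite_subset)
qed

lemma cis_measurable[measurable]: "cis \<in> borel_measurable borel"
  by (intro borel_measurable_continuous_onI continuous_intros)

lemma fubini_bound:
  fixes f :: "'a \<Rightarrow> 'b \<Rightarrow> 'c::{banach, second_countable_topology}"
  assumes A: "sigma_finite_measure A" and B: "sigma_finite_measure B"
    and fm: "(\<lambda>p. f (fst p) (snd p)) \<in> borel_measurable (A \<Otimes>\<^sub>M B)"
    and bnd: "\<And>x y. x \<in> space A \<Longrightarrow> y \<in> space B \<Longrightarrow> norm (f x y) \<le> gA x * gB y"
    and gA: "integrable A gA" and gB: "integrable B gB"
    and gAp: "\<And>x. gA x \<ge> 0" and gBp: "\<And>y. gB y \<ge> 0"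
  shows "(\<integral>x. (\<integral>y. f x y \<partial>B) \<partial>A) = (\<integral>y. (\<integral>x. f x y \<partial>A) \<partial>B)"
    and "integrable A (\<lambda>x. \<integral>y. f x y \<partial>B)"
    and "integrable B (\<lambda>y. \<integral>x. f x y \<partial>A)"
proof -
  interpret A: sigma_finite_measure A by fact
  interpret B: sigma_finite_measure B by fact
  interpret pair_sigma_finite A B ..
  have fm': "case_prod f \<in> borel_measurable (A \<Otimes>\<^sub>M B)"
    using fm by (simp add: case_prod_beta')
  have sec: "(\<lambda>y. f x y) \<in> borel_measurable B" if "x \<in> space A" for x
    using measurable_Pair2[OF fm' that] by simp
  have intsec: "integrable B (\<lambda>y. f x y)" if x: "x \<in> space A" for x
  proof (rule Bochner_Integration.integrable_bound[where f="\<lambda>y. gA x * gB y"])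
    show "integrable B (\<lambda>y. gA x * gB y)" using gB by simp
    show "(\<lambda>y. f x y) \<in> borel_measurable B" using sec[OF x] .
    show "AE y in B. norm (f x y) \<le> norm (gA x * gB y)"
      using bnd[OF x] gAp[of x] gBp by (intro AE_I2) (auto simp: abs_mult)
  qed
  have int: "integrable (A \<Otimes>\<^sub>M B) (case_prod f)"
  proof (rule Fubini_integrable)
    show "case_prod f \<in> borel_measurable (A \<Otimes>\<^sub>M B)" by (rule fm')
    show "integrable A (\<lambda>x. \<integral>y. norm (case_prod f (x, y)) \<partial>B)"
    proof (rule Bochner_Integration.integrable_bound[where f="\<lambda>x. gA x * (\<integral>y. gB y \<partial>B)"])
      show "integrable A (\<lambda>x. gA x * (\<integral>y. gB y \<partial>B))" using gA by simp
      show "(\<lambda>x. \<integral>y. norm (case_prod f (x, y)) \<partial>B) \<in> borel_measurable A"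
        using fm' by measurable
      show "AE x in A. norm (\<integral>y. norm (case_prod f (x, y)) \<partial>B) \<le> norm (gA x * (\<integral>y. gB y \<partial>B))"
      proof (rule AE_I2)
        fix x assume x: "x \<in> space A"
        have "(\<integral>y. norm (f x y) \<partial>B) \<le> (\<integral>y. gA x * gB y \<partial>B)"
          using intsec[OF x] gB bnd[OF x] by (intro integral_mono) auto
        also have "\<dots> = gA x * (\<integral>y. gB y \<partial>B)" by simp
        finally show "norm (\<integral>y. norm (case_prod f (x, y)) \<partial>B) \<le> norm (gA x * (\<integral>y. gB y \<partial>B))"
          using gAp[of x] gBp by (simp add: integral_nonneg_AE)
      qed
    qed
    show "AE x in A. integrable B (\<lambda>y. case_prod f (x, y))"
      using intsec by (intro AE_I2) simp
  qed
  show "(\<integral>x. (\<integral>y. f x y \<partial>B) \<partial>A) = (\<integral>y. (\<integral>x. f x y \<partial>A) \<partial>B)"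
    using Fubini_integral[OF int] by simp
  show "integrable A (\<lambda>x. \<integral>y. f x y \<partial>B)" using integrable_fst[OF int] .
  show "integrable B (\<lambda>y. \<integral>x. f x y \<partial>A)" using integrable_snd[OF int] .
qed

lemma lborel_reflect:
  fixes H :: "'a::euclidean_space \<Rightarrow> 'b::{banach, second_countable_topology}"
  assumes [measurable]: "H \<in> borel_measurable borel"
  shows "(\<integral>x. H x \<partial>lborel) = (\<integral>v. H (u - v) \<partial>lborel)"
    and "integrable lborel H \<Longrightarrow> integrable lborel (\<lambda>v. H (u - v))"
proof -
  have T: "(\<lambda>v. u + (\<Sum>j\<in>Basis. ((- 1) * (v \<bullet> j)) *\<^sub>R j)) = (\<lambda>v::'a. u - v)"
  proof
    fix v :: 'a
    have "(\<Sum>j\<in>Basis. ((- 1) * (v \<bullet> j)) *\<^sub>R j) = - (\<Sum>j\<in>Basis. (v \<bullet> j) *\<^sub>R j)"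
      by (simp add: sum_negf)
    then show "u + (\<Sum>j\<in>Basis. ((- 1) * (v \<bullet> j)) *\<^sub>R j) = u - v"
      by (simp add: euclidean_representation)
  qed
  have L: "lborel = distr lborel borel (\<lambda>v::'a. u - v)"
    using lborel_affine_euclidean[where c="\<lambda>_. -1" and t=u] unfolding T by (simp add: density_1)
  have m: "(\<lambda>v::'a. u - v) \<in> borel_measurable borel" by simp
  show "(\<integral>x. H x \<partial>lborel) = (\<integral>v. H (u - v) \<partial>lborel)"
    by (subst L) (simp add: integral_distr)
  assume "integrable lborel H"
  then have "integrable (distr lborel borel (\<lambda>v::'a. u - v)) H"
    using L by simp
  then show "integrable lborel (\<lambda>v. H (u - v))"
    by (subst (asm) integrable_distr_eq) auto
qed


lemma meas_pair_borel:
  assumes "sets A = sets borel" "sets B = sets borel"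
  shows "measurable (A \<Otimes>\<^sub>M B) N = measurable (borel \<Otimes>\<^sub>M borel) N"
  by (rule measurable_cong_sets[OF sets_pair_measure_cong[OF assms] refl])

lemma param_int_meas:
  fixes F :: "'a::second_countable_topology \<Rightarrow> 'b::second_countable_topology \<Rightarrow> 'c::{banach, second_countable_topology}"
  assumes P: "sigma_finite_measure P" "sets P = sets borel"
    and F: "(\<lambda>p. F (fst p) (snd p)) \<in> borel_measurable (borel \<Otimes>\<^sub>M borel)"
  shows "(\<lambda>w. \<integral>v. F w v \<partial>P) \<in> borel_measurable borel"
proof -
  interpret sigma_finite_measure P by fact
  have "case_prod F \<in> borel_measurable (borel \<Otimes>\<^sub>M P)"
    using F meas_pair_borel[of borel P] P(2) by (simp add: case_prod_beta')
  then show ?thesis by (rule borel_measurable_lebesgue_integral)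
qed

lemma charf_meas:
  assumes "sigma_finite_measure P" "sets P = sets (borel :: (real^'n::finite) measure)"
  shows "(\<lambda>w. \<integral>v. cis (w \<bullet> v) \<partial>P) \<in> borel_measurable borel"
  by (rule param_int_meas[OF assms]) measurable

lemma fourier_meas:
  assumes [measurable]: "\<psi> \<in> borel_measurable borel"
  shows "fourier \<psi> \<in> borel_measurable (borel :: (real^'n::finite) measure)"
  unfolding fourier_def[abs_def]
  by (rule param_int_meas[of lborel]) (auto intro: lborel.sigma_finite_measure_axioms)

lemma cont_conv:
  fixes \<phi> :: "'a::euclidean_space \<Rightarrow> real"
  assumes N: "finite_measure N" "sets N = sets borel"
    and c: "continuous_on UNIV \<phi>" and b: "bounded (range \<phi>)"
  shows "continuous_on UNIV (\<lambda>x. \<integral>u. \<phi> (u - x) \<partial>N)"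
proof -
  interpret finite_measure N by fact
  obtain B where B: "\<And>x. \<bar>\<phi> x\<bar> \<le> B" using bounded_range_abs[OF b] by blast
  have m: "(\<lambda>u. \<phi> (u - x)) \<in> borel_measurable N" for x
    by (rule meas_sets_borel[OF N(2)])
       (intro borel_measurable_continuous_onI continuous_on_compose2[OF c] continuous_intros, auto)
  have "isCont (\<lambda>x. \<integral>u. \<phi> (u - x) \<partial>N) a" for a
  proof (rule continuous_at_sequentiallyI)
    fix X assume X: "X \<longlonglongrightarrow> a"
    show "(\<lambda>n. \<integral>u. \<phi> (u - X n) \<partial>N) \<longlonglongrightarrow> (\<integral>u. \<phi> (u - a) \<partial>N)"
    proof (rule integral_dominated_convergence[where w="\<lambda>_. B"])
      show "AE u in N. (\<lambda>n. \<phi> (u - X n)) \<longlonglongrightarrow> \<phi> (u - a)"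
      proof (rule AE_I2)
        fix u
        have "isCont \<phi> (u - a)" using c by (simp add: continuous_on_eq_continuous_at)
        then show "(\<lambda>n. \<phi> (u - X n)) \<longlonglongrightarrow> \<phi> (u - a)"
          by (rule isCont_tendsto_compose) (intro tendsto_intros X)
      qed
    qed (auto simp: m B)
  qed
  then show ?thesis by (simp add: continuous_at_imp_continuous_on)
qed

lemma conv_bound:
  fixes \<phi> :: "'a::euclidean_space \<Rightarrow> real"
  assumes N: "finite_measure N" "sets N = sets borel"
    and c: "continuous_on UNIV \<phi>" and B: "\<And>x. \<bar>\<phi> x\<bar> \<le> B"
  shows "\<bar>\<integral>u. \<phi> (u - x) \<partial>N\<bar> \<le> B * measure N (space N)"
proof -
  interpret finite_measure N by fact
  have m: "(\<lambda>u. \<phi> (u - x)) \<in> borel_measurable N"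
    by (rule meas_sets_borel[OF N(2)])
       (intro borel_measurable_continuous_onI continuous_on_compose2[OF c] continuous_intros, auto)
  have i: "integrable N (\<lambda>u. \<phi> (u - x))"
    by (rule integrable_const_bound[where B=B]) (auto simp: B m)
  have "\<bar>\<integral>u. \<phi> (u - x) \<partial>N\<bar> \<le> (\<integral>u. \<bar>\<phi> (u - x)\<bar> \<partial>N)"
    using integral_norm_bound[of N "\<lambda>u. \<phi> (u - x)"] by simp
  also have "\<dots> \<le> (\<integral>u. B \<partial>N)"
    using B i by (intro integral_mono) auto
  finally have "\<bar>\<integral>u. \<phi> (u - x) \<partial>N\<bar> \<le> (\<integral>u. B \<partial>N)" .
  then show ?thesis by (simp add: mult.commute)
qed


lemma gauss1_base:
  "(\<integral>x. cis (t * x) * complex_of_real (exp (- (x^2) / 2)) \<partial>lborel) =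
     complex_of_real (sqrt (2*pi) * exp (- (t^2) / 2))"
proof -
  have "char std_normal_distribution t = complex_of_real (exp (- (t^2) / 2))"
    by (simp add: char_std_normal_distribution)
  moreover have "char std_normal_distribution t =
     (\<integral>x. complex_of_real (std_normal_density x) * cis (t * x) \<partial>lborel)"
    unfolding char_def
    by (subst integral_density) (auto simp: cis_conv_exp scaleR_conv_of_real mult.commute)
  moreover have "(\<integral>x. complex_of_real (std_normal_density x) * cis (t * x) \<partial>lborel)
     = (1 / sqrt (2*pi)) * (\<integral>x. cis (t * x) * complex_of_real (exp (- (x^2) / 2)) \<partial>lborel)"
    by (simp add: std_normal_density_def mult_ac)
  ultimately show ?thesis
    by (simp add: field_simps)
qed

lemma gauss1:
  assumes e: "(e::real) > 0"
  shows "(\<integral>x. cis (y * x) * complex_of_real (exp (- ((e*x)^2) / 2)) \<partial>lborel) =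
     complex_of_real (sqrt (2*pi) / e * exp (- ((y/e)^2) / 2))"
proof -
  have "(\<integral>x. cis ((y/e) * x) * complex_of_real (exp (- (x^2) / 2)) \<partial>lborel)
      = \<bar>e\<bar> *\<^sub>R (\<integral>x. cis ((y/e) * (0 + e * x)) * complex_of_real (exp (- ((0 + e*x)^2) / 2)) \<partial>lborel)"
    using e by (intro lborel_integral_real_affine) auto
  also have "(\<lambda>x. cis ((y/e) * (0 + e * x)) * complex_of_real (exp (- ((0 + e*x)^2) / 2)))
     = (\<lambda>x. cis (y * x) * complex_of_real (exp (- ((e*x)^2) / 2)))"
    using e by (auto simp: fun_eq_iff)
  finally have "(\<integral>x. cis (y * x) * complex_of_real (exp (- ((e*x)^2) / 2)) \<partial>lborel)
     = (1/e) *\<^sub>R (\<integral>x. cis ((y/e) * x) * complex_of_real (exp (- (x^2) / 2)) \<partial>lborel)"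
    using e by simp
  also have "\<dots> = (1/e) *\<^sub>R complex_of_real (sqrt (2*pi) * exp (- ((y/e)^2) / 2))"
    by (simp only: gauss1_base)
  finally show ?thesis by (simp add: scaleR_conv_of_real)
qed

lemma gauss1_moment_integrable:
  assumes e: "(e::real) > 0"
  shows "integrable lborel (\<lambda>x. \<bar>x\<bar>^m * exp (- ((e*x)^2) / 2))"
proof -
  have "integrable lborel (\<lambda>x. std_normal_density (0 + e * x) * \<bar>0 + e * x\<bar>^m)"
    using e by (intro lborel_integrable_real_affine[where f="\<lambda>x. std_normal_density x * \<bar>x\<bar>^m"])
      (auto intro: integrable_std_normal_moment_abs)
  then have "integrable lborel (\<lambda>x. (sqrt (2*pi) / e^m) * (std_normal_density (0 + e * x) * \<bar>0 + e * x\<bar>^m))"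
    by (rule integrable_mult_right)
  moreover have "(\<lambda>x. (sqrt (2*pi) / e^m) * (std_normal_density (0 + e * x) * \<bar>0 + e * x\<bar>^m))
     = (\<lambda>x. \<bar>x\<bar>^m * exp (- ((e*x)^2) / 2))"
    using e by (auto simp: fun_eq_iff std_normal_density_def abs_mult power_mult_distrib)
  ultimately show ?thesis by simp
qed

lemma lborel_prod_integrable:
  fixes g :: "'a::euclidean_space \<Rightarrow> real \<Rightarrow> 'c::{real_normed_field,banach,second_countable_topology}"
  assumes "\<And>b. b \<in> Basis \<Longrightarrow> integrable lborel (g b)"
  shows "integrable (lborel::'a measure) (\<lambda>x. \<Prod>b\<in>Basis. g b (x \<bullet> b))"
    and "(\<integral>x. (\<Prod>b\<in>Basis. g b (x \<bullet> b)) \<partial>(lborel::'a measure)) = (\<Prod>b\<in>Basis. integral\<^sup>L lborel (g b))"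
proof -
  interpret product_sigma_finite "\<lambda>_::'a. lborel::real measure"
    by standard
  have [measurable]: "\<And>b. b \<in> Basis \<Longrightarrow> g b \<in> borel_measurable borel"
    using borel_measurable_integrable[OF assms] by simp
  have meas: "(\<lambda>x::'a. \<Prod>b\<in>Basis. g b (x \<bullet> b)) \<in> borel_measurable borel"
    by measurable
  have eq: "\<And>f. 
     (\<Prod>b\<in>Basis. g b ((\<Sum>b'\<in>Basis. f b' *\<^sub>R b') \<bullet> b)) = (\<Prod>b\<in>Basis. g b (f b))"
    by (intro prod.cong refl) (simp add: inner_sum_left inner_Basis if_distrib sum.delta cong: if_cong)
  have i1: "integrable (\<Pi>\<^sub>M b\<in>Basis. lborel) (\<lambda>f. \<Prod>b\<in>Basis. g b (f b))"
    using assms by (intro product_integrable_prod) auto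
  have "integrable (\<Pi>\<^sub>M b\<in>Basis. lborel) (\<lambda>f. \<Prod>b\<in>Basis. g b ((\<Sum>b'\<in>Basis. f b' *\<^sub>R b') \<bullet> b))"
    using i1 by (simp add: eq)
  then show "integrable (lborel::'a measure) (\<lambda>x. \<Prod>b\<in>Basis. g b (x \<bullet> b))"
    by (subst lborel_eq) (subst integrable_distr_eq; simp add: meas)
  have "(\<integral>x. (\<Prod>b\<in>Basis. g b (x \<bullet> b)) \<partial>(lborel::'a measure)) =
     (\<integral>f. (\<Prod>b\<in>Basis. g b ((\<Sum>b'\<in>Basis. f b' *\<^sub>R b') \<bullet> b)) \<partial>(\<Pi>\<^sub>M b\<in>Basis. lborel))"
    by (subst lborel_eq) (subst integral_distr; simp add: meas)
  also have "\<dots> = (\<integral>f. (\<Prod>b\<in>Basis. g b (f b)) \<partial>(\<Pi>\<^sub>M b\<in>Basis. lborel))"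
    by (simp add: eq)
  also have "\<dots> = (\<Prod>b\<in>Basis. integral\<^sup>L lborel (g b))"
    using assms by (intro product_integral_prod) auto
  finally show "(\<integral>x. (\<Prod>b\<in>Basis. g b (x \<bullet> b)) \<partial>(lborel::'a measure)) = (\<Prod>b\<in>Basis. integral\<^sup>L lborel (g b))" .
qed

definition gE :: "real \<Rightarrow> 'a::euclidean_space \<Rightarrow> real" where
  "gE e w = exp (- ((e * norm w)^2) / 2)"

lemma gE_pos: "gE e w > 0" by (simp add: gE_def)

lemma norm2_sum: "(norm (w::'a::euclidean_space))^2 = (\<Sum>b\<in>Basis. (w \<bullet> b)^2)"
  unfolding power2_norm_eq_inner by (subst euclidean_inner) (simp add: power2_eq_square)

lemma gE_prod: "gE e w = (\<Prod>b\<in>Basis. exp (- ((e * (w \<bullet> b))^2) / 2))"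
proof -
  have n2: "(norm w)^2 = (\<Sum>b\<in>Basis. (w \<bullet> b)^2)"
    unfolding power2_norm_eq_inner by (subst euclidean_inner) (simp add: power2_eq_square)
  have "(e * norm w)^2 = (\<Sum>b\<in>Basis. (e * (w \<bullet> b))^2)"
    by (simp add: power_mult_distrib n2 sum_distrib_left)
  then show ?thesis
    unfolding gE_def by (simp add: exp_sum[symmetric] sum_negf sum_divide_distrib)
qed

lemma cis_inner_prod: "cis (w \<bullet> y) = (\<Prod>b\<in>Basis. cis ((y \<bullet> b) * (w \<bullet> b)))"
proof -
  have "cis (w \<bullet> y) = exp (\<i> * complex_of_real (\<Sum>b\<in>Basis. (y \<bullet> b) * (w \<bullet> b)))"
    by (simp add: cis_conv_exp euclidean_inner[of w y] mult.commute)
  also have "\<dots> = exp (\<Sum>b\<in>Basis. \<i> * complex_of_real ((y \<bullet> b) * (w \<bullet> b)))"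
    by (simp add: sum_distrib_left)
  also have "\<dots> = (\<Prod>b\<in>Basis. cis ((y \<bullet> b) * (w \<bullet> b)))"
    by (simp add: exp_sum cis_conv_exp)
  finally show ?thesis .
qed

lemma gE_measurable[measurable]: "gE e \<in> borel_measurable borel"
  unfolding gE_def by measurable

lemma gauss_d:
  assumes e: "e > 0"
  shows "(\<integral>w. cis (w \<bullet> y) * complex_of_real (gE e w) \<partial>(lborel::'a::euclidean_space measure)) =
     complex_of_real ((sqrt (2*pi) / e)^DIM('a) * exp (- ((norm y / e)^2) / 2))"
proof -
  define g where "g b x = cis ((y \<bullet> b) * x) * complex_of_real (exp (- ((e*x)^2) / 2))" for b :: 'a and x
  have i0: "integrable lborel (\<lambda>x. \<bar>x\<bar>^0 * exp (- ((e*x)^2) / 2))"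
      using e by (rule gauss1_moment_integrable)
  have int: "integrable lborel (g b)" for b
    by (rule Bochner_Integration.integrable_bound[OF i0]) (auto simp: g_def norm_mult intro!: borel_measurable_continuous_onI continuous_intros)
  have eq: "cis (w \<bullet> y) * complex_of_real (gE e w) = (\<Prod>b\<in>Basis. g b (w \<bullet> b))" for w :: 'a
    by (simp add: g_def prod.distrib gE_prod cis_inner_prod)
  have "(\<integral>w. cis (w \<bullet> y) * complex_of_real (gE e w) \<partial>(lborel::'a measure)) = (\<Prod>b\<in>Basis. integral\<^sup>L lborel (g b))"
    unfolding eq using int by (rule lborel_prod_integrable(2))
  also have "\<dots> = (\<Prod>b\<in>(Basis::'a set). complex_of_real (sqrt (2*pi) / e * exp (- (((y \<bullet> b)/e)^2) / 2)))"
    unfolding g_def using e by (intro prod.cong refl gauss1)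
  also have "\<dots> = complex_of_real ((sqrt (2*pi) / e)^DIM('a) * exp (- ((norm y / e)^2) / 2))"
  proof -
    have "(norm y / e)^2 = (\<Sum>b\<in>(Basis::'a set). ((y \<bullet> b)/e)^2)"
      by (simp add: power_divide norm2_sum sum_divide_distrib)
    note n2 = this
    have A: "(\<Prod>b\<in>(Basis::'a set). sqrt (2*pi) / e * exp (- (((y \<bullet> b)/e)^2) / 2)) =
       (\<Prod>b\<in>(Basis::'a set). sqrt (2*pi) / e) * (\<Prod>b\<in>(Basis::'a set). exp (- (((y \<bullet> b)/e)^2) / 2))"
      by (rule prod.distrib)
    have B: "(\<Prod>b\<in>(Basis::'a set). exp (- (((y \<bullet> b)/e)^2) / 2)) = exp (\<Sum>b\<in>(Basis::'a set). - (((y \<bullet> b)/e)^2) / 2)"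
      by (simp add: exp_sum)
    have C: "(\<Sum>b\<in>(Basis::'a set). - (((y \<bullet> b)/e)^2) / 2) = - ((norm y / e)^2) / 2"
      using n2 by (simp add: sum_negf sum_divide_distrib[symmetric])
    have "(\<Prod>b\<in>(Basis::'a set). sqrt (2*pi) / e * exp (- (((y \<bullet> b)/e)^2) / 2)) =
        (sqrt (2*pi) / e)^DIM('a) * exp (- ((norm y / e)^2) / 2)"
      unfolding A B C by simp
    then show ?thesis
      by (metis (no_types, lifting) of_real_prod prod.cong)
  qed
  finally show ?thesis .
qed

lemma gE_integrable:
  assumes e: "e > 0"
  shows "integrable (lborel::'a::euclidean_space measure) (gE e)"
proof -
  have "integrable (lborel::'a measure) (\<lambda>w. \<Prod>b\<in>Basis. \<bar>w \<bullet> b\<bar>^0 * exp (- ((e*(w \<bullet> b))^2) / 2))"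
    using e by (intro lborel_prod_integrable(1) gauss1_moment_integrable)
  then show ?thesis by (simp add: gE_prod[abs_def])
qed

lemma one_plus_sum_le_prod:
  assumes "finite B" "\<And>b. b \<in> B \<Longrightarrow> (a b :: real) \<ge> 0"
  shows "1 + (\<Sum>b\<in>B. a b) \<le> (\<Prod>b\<in>B. 1 + a b)"
  using assms
proof (induction B rule: finite_induct)
  case (insert x F)
  have "1 + (\<Sum>b\<in>insert x F. a b) = a x + (1 + (\<Sum>b\<in>F. a b))" using insert by simp
  also have "\<dots> \<le> a x * (\<Prod>b\<in>F. 1 + a b) + (\<Prod>b\<in>F. 1 + a b)"
  proof -
    have p1: "(\<Prod>b\<in>F. 1 + a b) \<ge> 1"
      using insert by (intro prod_ge_1) auto
    have "a x \<le> a x * (\<Prod>b\<in>F. 1 + a b)"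
      using insert(4)[of x] p1 by (simp add: mult_le_cancel_left1)
    then show ?thesis using insert by simp
  qed
  also have "\<dots> = (\<Prod>b\<in>insert x F. 1 + a b)" using insert by (simp add: algebra_simps)
  finally show ?case .
qed simp

lemma one_plus_pow_le: "(a::real) \<ge> 0 \<Longrightarrow> (1 + a)^k \<le> 2^k * (1 + a^k)"
proof -
  assume a: "a \<ge> 0"
  have "(1 + a)^k \<le> (2 * max 1 a)^k"
    using a by (intro power_mono) auto
  also have "\<dots> = 2^k * (max 1 a)^k" by (simp add: power_mult_distrib)
  also have "(max 1 a)^k \<le> 1 + a^k"
    using a by (cases "a \<le> 1") (auto simp: max_def)
  finally show ?thesis by simp
qed

lemma gE_moment_integrable:
  assumes e: "e > 0"
  shows "integrable (lborel::'a::euclidean_space measure) (\<lambda>w. (1 + norm w)^k * gE e w)"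
proof (rule Bochner_Integration.integrable_bound[OF _ _ ])
  show "integrable (lborel::'a measure) (\<lambda>w. \<Prod>b\<in>Basis. 2^k * (\<bar>w \<bullet> b\<bar>^0 * exp (- ((e*(w \<bullet> b))^2) / 2)
        + \<bar>w \<bullet> b\<bar>^k * exp (- ((e*(w \<bullet> b))^2) / 2)))"
    using e by (intro lborel_prod_integrable(1) integrable_mult_right Bochner_Integration.integrable_add gauss1_moment_integrable)
  have bnd: "norm ((1 + norm w)^k * gE e w) \<le> norm (\<Prod>b\<in>Basis. 2^k * (\<bar>w \<bullet> b\<bar>^0 * exp (- ((e*(w \<bullet> b))^2) / 2)
        + \<bar>w \<bullet> b\<bar>^k * exp (- ((e*(w \<bullet> b))^2) / 2)))" for w :: 'a
  proof -
    have "(1 + norm w)^k \<le> (1 + (\<Sum>b\<in>Basis. \<bar>w \<bullet> b\<bar>))^k"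
      by (intro power_mono) (auto simp: norm_le_l1)
    also have "\<dots> \<le> (\<Prod>b\<in>Basis. 1 + \<bar>w \<bullet> b\<bar>)^k"
      by (intro power_mono one_plus_sum_le_prod) (auto intro: sum_nonneg)
    also have "\<dots> = (\<Prod>b\<in>Basis. (1 + \<bar>w \<bullet> b\<bar>)^k)" by (simp add: prod_power_distrib)
    also have "\<dots> \<le> (\<Prod>b\<in>Basis. 2^k * (1 + \<bar>w \<bullet> b\<bar>^k))"
      by (intro prod_mono conjI one_plus_pow_le) auto
    finally have 1: "(1 + norm w)^k \<le> (\<Prod>b\<in>Basis. 2^k * (1 + \<bar>w \<bullet> b\<bar>^k))" .
    have "(1 + norm w)^k * gE e w \<le> (\<Prod>b\<in>Basis. 2^k * (1 + \<bar>w \<bullet> b\<bar>^k)) * gE e w"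
      using 1 gE_pos[of e w] by (intro mult_right_mono) auto
    also have "\<dots> = (\<Prod>b\<in>Basis. 2^k * (\<bar>w \<bullet> b\<bar>^0 * exp (- ((e*(w \<bullet> b))^2) / 2)
        + \<bar>w \<bullet> b\<bar>^k * exp (- ((e*(w \<bullet> b))^2) / 2)))"
      by (simp add: gE_prod prod.distrib[symmetric] algebra_simps)
    finally show "norm ((1 + norm w)^k * gE e w) \<le> norm (\<Prod>b\<in>Basis. 2^k * (\<bar>w \<bullet> b\<bar>^0 * exp (- ((e*(w \<bullet> b))^2) / 2)
        + \<bar>w \<bullet> b\<bar>^k * exp (- ((e*(w \<bullet> b))^2) / 2)))"
      using gE_pos[of e w] by (simp add: abs_mult)
  qed
  show "AE w in (lborel::'a measure). norm ((1 + norm w)^k * gE e w) \<le> norm (\<Prod>b\<in>Basis. 2^k * (\<bar>w \<bullet> b\<bar>^0 * exp (- ((e*(w \<bullet> b))^2) / 2)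
        + \<bar>w \<bullet> b\<bar>^k * exp (- ((e*(w \<bullet> b))^2) / 2)))"
    using bnd by auto
qed (simp add: gE_def)


definition Kf :: "real \<Rightarrow> real^'n::finite \<Rightarrow> real^'n \<Rightarrow> real" where
  "Kf e a x = exp (- ((norm (x - a) / e)^2) / 2)"

lemma Kf_pos: "Kf e a x > 0" by (simp add: Kf_def)
lemma Kf_le1: "Kf e a x \<le> 1" by (simp add: Kf_def)

lemma Kf_meas[measurable]: "Kf e a \<in> borel_measurable borel"
  unfolding Kf_def[abs_def] by measurable

lemma Kf_cont: "continuous_on UNIV (Kf e a)"
  unfolding Kf_def[abs_def] divide_inverse by (intro continuous_intros)

lemma Kf_integrable: fixes a :: "real^'n::finite" assumes e: "e > 0" shows "integrable lborel (Kf e a)"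
proof -
  have "integrable lborel (\<lambda>v. gE (1/e) (a - v :: real^'n))"
    using gE_integrable[of "1/e", where 'a="real^'n"] e
    by (intro lborel_reflect(2)) auto
  moreover have "gE (1/e) (a - v) = Kf e a v" for v
    using norm_minus_commute[of a v] by (simp add: gE_def Kf_def)
  ultimately show ?thesis by simp
qed

lemma K_repr:
  fixes a x :: "real^'n::finite"
  assumes e: "e > 0"
  shows "complex_of_real (Kf e a x) =
     complex_of_real ((e / sqrt (2*pi))^CARD('n)) * (\<integral>w. cis (w \<bullet> (x - a)) * complex_of_real (gE e w) \<partial>lborel)"
proof -
  have g: "(\<integral>w. cis (w \<bullet> (x - a)) * complex_of_real (gE e w) \<partial>lborel) =
     complex_of_real ((sqrt (2*pi) / e)^DIM(real^'n) * exp (- ((norm (x - a) / e)^2) / 2))"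
    using e by (rule gauss_d)
  have c1: "(e / sqrt (2*pi))^CARD('n) * (sqrt (2*pi) / e)^CARD('n) = 1"
    using e by (simp add: power_mult_distrib[symmetric])
  have "complex_of_real ((e / sqrt (2*pi))^CARD('n)) * complex_of_real ((sqrt (2*pi) / e)^CARD('n) * exp (- ((norm (x - a) / e)^2) / 2))
     = complex_of_real (((e / sqrt (2*pi))^CARD('n) * (sqrt (2*pi) / e)^CARD('n)) * exp (- ((norm (x - a) / e)^2) / 2))"
    by (simp only: of_real_mult mult.assoc)
  then show ?thesis
    unfolding g Kf_def c1 by simp
qed


lemma gE1_integral_pos: "(\<integral>w. gE 1 w \<partial>(lborel :: 'a::euclidean_space measure)) > 0"
proof -
  have "(\<integral>w. cis (w \<bullet> 0) * complex_of_real (gE 1 w) \<partial>(lborel :: 'a measure)) =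
     complex_of_real ((sqrt (2*pi) / 1)^DIM('a) * exp (- ((norm (0::'a) / 1)^2) / 2))"
    by (rule gauss_d) simp
  then have "complex_of_real (\<integral>w. gE 1 w \<partial>(lborel :: 'a measure)) = complex_of_real ((sqrt (2*pi))^DIM('a))"
    by simp
  then have "(\<integral>w. gE 1 w \<partial>(lborel :: 'a measure)) = (sqrt (2*pi))^DIM('a)"
    using of_real_eq_iff by blast
  then show ?thesis by simp
qed

lemma approx_zero:
  fixes h :: "real^'n::finite \<Rightarrow> real"
  assumes hc: "continuous_on UNIV h" and hb: "\<And>x. \<bar>h x\<bar> \<le> B"
    and Z: "\<And>e. e > 0 \<Longrightarrow> (\<integral>x. h x * Kf e a x \<partial>lborel) = 0"
  shows "h a = 0"
proof -
  have hm[measurable]: "h \<in> borel_measurable borel" by (rule borel_measurable_continuous_onI[OF hc])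
  have Z1: "(\<integral>z. h (a + e *\<^sub>R z) * gE 1 z \<partial>lborel) = 0" if e: "e > 0" for e
  proof -
    have L: "lborel = density (distr lborel borel (\<lambda>z. a + e *\<^sub>R z)) (\<lambda>_. \<bar>e\<bar>^DIM(real^'n))"
      using e by (intro lborel_affine) simp
    have "0 = (\<integral>x. h x * Kf e a x \<partial>lborel)" using Z[OF e] by simp
    also have "\<dots> = (\<integral>x. h x * Kf e a x \<partial>density (distr lborel borel (\<lambda>z. a + e *\<^sub>R z)) (\<lambda>_. \<bar>e\<bar>^DIM(real^'n)))"
      by (subst L) (rule refl)
    also have "\<dots> = (\<integral>x. \<bar>e\<bar>^DIM(real^'n) * (h x * Kf e a x) \<partial>distr lborel borel (\<lambda>z. a + e *\<^sub>R z))"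
      by (subst integral_density) (auto simp: ennreal_power)
    also have "\<dots> = (\<integral>z. \<bar>e\<bar>^DIM(real^'n) * (h (a + e *\<^sub>R z) * Kf e a (a + e *\<^sub>R z)) \<partial>lborel)"
      by (subst integral_distr) auto
    also have "\<dots> = \<bar>e\<bar>^DIM(real^'n) * (\<integral>z. h (a + e *\<^sub>R z) * gE 1 z \<partial>lborel)"
    proof -
      have "Kf e a (a + e *\<^sub>R z) = gE 1 z" for z
        using e by (simp add: Kf_def gE_def)
      then show ?thesis by simp
    qed
    finally show ?thesis using e by simp
  qed
  define s where "s n = 1 / real (Suc n)" for n
  have s: "s n > 0" for n by (simp add: s_def)
  have s0: "s \<longlonglongrightarrow> 0" unfolding s_def by (rule LIMSEQ_Suc[OF lim_const_over_n])
  have "(\<lambda>n. \<integral>z. h (a + s n *\<^sub>R z) * gE 1 z \<partial>lborel) \<longlonglongrightarrow> (\<integral>z. h a * gE 1 z \<partial>(lborel :: (real^'n) measure))"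
  proof (rule integral_dominated_convergence[where w="\<lambda>z::real^'n. B * gE 1 z"])
    show "integrable lborel (\<lambda>z. B * gE 1 (z::real^'n))"
      by (rule integrable_mult_right[OF gE_integrable]) simp
    show "AE z in lborel. (\<lambda>n. h (a + s n *\<^sub>R z) * gE 1 z) \<longlonglongrightarrow> h a * gE 1 z"
    proof (rule AE_I2)
      fix z :: "real^'n"
      have "isCont h a" using hc by (simp add: continuous_on_eq_continuous_at)
      moreover have "(\<lambda>n. a + s n *\<^sub>R z) \<longlonglongrightarrow> a"
        using tendsto_add[OF tendsto_const[of a] tendsto_scaleR[OF s0 tendsto_const[of z]]] by simp
      ultimately have "(\<lambda>n. h (a + s n *\<^sub>R z)) \<longlonglongrightarrow> h a" by (rule isCont_tendsto_compose)
      then show "(\<lambda>n. h (a + s n *\<^sub>R z) * gE 1 z) \<longlonglongrightarrow> h a * gE 1 z"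
        by (intro tendsto_intros)
    qed
    show "AE z in lborel. norm (h (a + s n *\<^sub>R z) * gE 1 z) \<le> B * gE 1 z" for n
      by (intro AE_I2) (simp add: abs_mult mult_right_mono abs_of_pos gE_pos hb less_imp_le)
  qed auto
  moreover have "(\<lambda>n. \<integral>z. h (a + s n *\<^sub>R z) * gE 1 z \<partial>lborel) = (\<lambda>n. 0)"
    using Z1[OF s] by simp
  ultimately have lim: "(\<lambda>n. 0::real) \<longlonglongrightarrow> (\<integral>z. h a * gE 1 z \<partial>(lborel :: (real^'n) measure))"
    by simp
  have "h a * (\<integral>z. gE 1 z \<partial>(lborel :: (real^'n) measure)) = 0"
    using LIMSEQ_unique[OF lim tendsto_const] by simp
  with gE1_integral_pos[where 'a="real^'n"] show ?thesis by simp
qed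


lemma fin_null: "finite_measure (null_measure M)"
  by (intro finite_measureI) simp

context
  fixes fV L :: "real^'n::finite \<Rightarrow> real" and PV :: "(real^'n) measure" and k :: nat
    and Mp Mn :: "'n multi_index \<Rightarrow> (real^'n) measure"
  assumes fVc: "continuous_on UNIV fV" and fVp: "\<And>v. fV v \<ge> 0" and fVi: "integrable lborel fV"
    and fVg: "good k fV"
    and PV: "PV = density lborel (\<lambda>v. ennreal (fV v))" and PVp: "prob_space PV"
    and Lc: "continuous_on UNIV L" and Lb: "bounded (range L)" and Li: "integrable lborel L"
    and Ms: "\<And>\<alpha>. \<alpha> \<in> multi_indices k \<Longrightarrow> fin_signed (Mp \<alpha>) (Mn \<alpha>)"
    and AEphi: "AE w in lborel. charf PV (- w) \<noteq> 0"
    and AEQ: "AE w in lborel. (if charf PV (- w) \<noteq> 0 then fourier (\<lambda>x. complex_of_real (L x)) w / charf PV (- w) else 0)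
         = (\<Sum>\<alpha>\<in>multi_indices k. i_omega_pow \<alpha> w * schar (Mp \<alpha>) (Mn \<alpha>) w)"
begin

lemma Lm[measurable]: "L \<in> borel_measurable borel"
  by (rule borel_measurable_continuous_onI[OF Lc])

lemma fVm[measurable]: "fV \<in> borel_measurable borel"
  by (rule borel_measurable_continuous_onI[OF fVc])

lemma LB: obtains B where "\<And>x. \<bar>L x\<bar> \<le> B"
  using bounded_range_abs[OF Lb] by blast

lemma sets_PV: "sets PV = sets borel" by (simp add: PV)

lemma charf_density: "charf PV w = (\<integral>v. complex_of_real (fV v) * cis (w \<bullet> v) \<partial>lborel)"
  unfolding charf_def PV
  by (subst integral_density) (auto simp: fVp scaleR_conv_of_real)

lemma charf_norm: "norm (charf PV w) \<le> 1"
proof -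
  interpret prob_space PV by (rule PVp)
  have "norm (charf PV w) \<le> (\<integral>v. norm (cis (w \<bullet> v)) \<partial>PV)"
    unfolding charf_def by (rule integral_norm_bound)
  then show ?thesis by (simp add: prob_space)
qed

lemma charf_m[measurable]: "charf PV \<in> borel_measurable borel"
proof -
  interpret prob_space PV by (rule PVp)
  have "(\<lambda>w. \<integral>v. cis (w \<bullet> v) \<partial>PV) \<in> borel_measurable borel"
    by (rule charf_meas) (auto simp: sets_PV intro: sigma_finite_measure_axioms)
  then show ?thesis by (simp add: charf_def[abs_def])
qed

definition FT where "FT = fourier (\<lambda>x. complex_of_real (L x))"

lemma FT_m[measurable]: "FT \<in> borel_measurable borel"
  unfolding FT_def by (rule fourier_meas) measurable

lemma I_lam:
  assumes e: "e > 0"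
  shows "complex_of_real (\<integral>x. L x * Kf e a x \<partial>lborel) =
    complex_of_real ((e / sqrt (2*pi))^CARD('n)) * (\<integral>w. cis (- (w \<bullet> a)) * complex_of_real (gE e w) * FT w \<partial>lborel)"
proof -
  obtain B where B: "\<And>x. \<bar>L x\<bar> \<le> B" using LB by blast
  define c where "c = complex_of_real ((e / sqrt (2*pi))^CARD('n))"
  define F where "F x w = complex_of_real (L x) * cis (w \<bullet> (x - a)) * complex_of_real (gE e w)" for x w :: "real^'n"
  have "complex_of_real (\<integral>x. L x * Kf e a x \<partial>lborel) = (\<integral>x. complex_of_real (L x) * complex_of_real (Kf e a x) \<partial>lborel)"
    by (simp only: of_real_mult[symmetric] integral_complex_of_real)
  also have "\<dots> = (\<integral>x. c * (\<integral>w. F x w \<partial>lborel) \<partial>lborel)"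
    by (intro Bochner_Integration.integral_cong refl) (simp add: K_repr[OF e] c_def F_def mult_ac)
  also have "\<dots> = c * (\<integral>x. (\<integral>w. F x w \<partial>lborel) \<partial>lborel)" by simp
  also have "(\<integral>x. (\<integral>w. F x w \<partial>lborel) \<partial>lborel) = (\<integral>w. (\<integral>x. F x w \<partial>lborel) \<partial>lborel)"
  proof (rule fubini_bound(1)[where gA="\<lambda>x. \<bar>L x\<bar>" and gB="gE e"])
    show "(\<lambda>p. F (fst p) (snd p)) \<in> borel_measurable (lborel \<Otimes>\<^sub>M lborel)"
      unfolding F_def by measurable
    show "norm (F x w) \<le> \<bar>L x\<bar> * gE e w" for x w
      using gE_pos[of e w] by (simp add: F_def norm_mult)
    show "integrable lborel (\<lambda>x. \<bar>L x\<bar>)" using Li by simp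
    show "integrable lborel (gE e :: real^'n \<Rightarrow> real)" using e by (rule gE_integrable)
    show "gE e w \<ge> 0" for w :: "real^'n" using gE_pos[of e w] by simp
  qed (auto intro: lborel.sigma_finite_measure_axioms)
  also have "\<dots> = (\<integral>w. cis (- (w \<bullet> a)) * complex_of_real (gE e w) * FT w \<partial>lborel)"
  proof (intro Bochner_Integration.integral_cong refl)
    fix w :: "real^'n"
    have "F x w = (cis (- (w \<bullet> a)) * complex_of_real (gE e w)) * (cis (w \<bullet> x) * complex_of_real (L x))" for x
      using cis_mult[of "w \<bullet> x" "- (w \<bullet> a)"] by (simp add: F_def inner_diff_right mult_ac)
    then show "(\<integral>x. F x w \<partial>lborel) = cis (- (w \<bullet> a)) * complex_of_real (gE e w) * FT w"
      by (simp add: FT_def fourier_def)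
  qed
  finally show ?thesis by (simp add: c_def)
qed

definition qf where
  "qf e a w = complex_of_real ((e / sqrt (2*pi))^CARD('n)) * cis (- (w \<bullet> a)) * complex_of_real (gE e w) * charf PV (- w)"

lemma qf_m[measurable]: "qf e a \<in> borel_measurable borel"
  unfolding qf_def[abs_def] by measurable

lemma qf_norm: assumes e: "e > 0" shows "norm (qf e a w) \<le> (e / sqrt (2*pi))^CARD('n) * gE e w"
proof -
  have "norm (qf e a w) = norm (complex_of_real ((e / sqrt (2*pi))^CARD('n))) * norm (cis (- (w \<bullet> a))) *
      norm (complex_of_real (gE e w)) * norm (charf PV (- w))"
    by (simp only: qf_def norm_mult)
  also have "\<dots> = (e / sqrt (2*pi))^CARD('n) * gE e w * norm (charf PV (- w))"
    using e gE_pos[of e w] by (simp only: norm_of_real norm_cis) simp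
  also have "\<dots> \<le> (e / sqrt (2*pi))^CARD('n) * gE e w * 1"
    using e gE_pos[of e w] by (intro mult_left_mono charf_norm) auto
  finally show ?thesis by simp
qed

lemma qf_int: assumes e: "e > 0" shows "integrable lborel (\<lambda>w. cis (w \<bullet> u) * qf e a w)"
proof (rule Bochner_Integration.integrable_bound[where f="\<lambda>w. (e / sqrt (2*pi))^CARD('n) * gE e w"])
  show "integrable lborel (\<lambda>w. (e / sqrt (2*pi))^CARD('n) * gE e (w::real^'n))"
    using gE_integrable[OF e, where 'a="real^'n"] by simp
  show "AE w in lborel. norm (cis (w \<bullet> u) * qf e a w) \<le> norm ((e / sqrt (2*pi))^CARD('n) * gE e w)"
    by (intro AE_I2) (simp add: norm_mult, rule order_trans[OF qf_norm[OF e] abs_ge_self])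
qed measurable

lemma Psi:
  assumes e: "e > 0"
  shows "(\<integral>x. fV (u - x) * Kf e a x \<partial>lborel) = (\<integral>w. Re (cis (w \<bullet> u) * qf e a w) \<partial>lborel)"
proof -
  define c where "c = complex_of_real ((e / sqrt (2*pi))^CARD('n))"
  define G where "G v w = complex_of_real (fV v) * cis (w \<bullet> (u - v - a)) * complex_of_real (gE e w)" for v w :: "real^'n"
  have r: "(\<integral>x. fV (u - x) * Kf e a x \<partial>lborel) = (\<integral>v. fV v * Kf e a (u - v) \<partial>lborel)"
    using lborel_reflect(1)[of "\<lambda>x. fV (u - x) * Kf e a x" u] by simp
  have "complex_of_real (\<integral>v. fV v * Kf e a (u - v) \<partial>lborel) =
      (\<integral>v. complex_of_real (fV v) * complex_of_real (Kf e a (u - v)) \<partial>lborel)"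
    by (simp only: of_real_mult[symmetric] integral_complex_of_real)
  also have "\<dots> = (\<integral>v. c * (\<integral>w. G v w \<partial>lborel) \<partial>lborel)"
    by (intro Bochner_Integration.integral_cong refl) (simp add: K_repr[OF e] c_def G_def mult_ac)
  also have "\<dots> = c * (\<integral>v. (\<integral>w. G v w \<partial>lborel) \<partial>lborel)" by simp
  also have "(\<integral>v. (\<integral>w. G v w \<partial>lborel) \<partial>lborel) = (\<integral>w. (\<integral>v. G v w \<partial>lborel) \<partial>lborel)"
  proof (rule fubini_bound(1)[where gA="fV" and gB="gE e"])
    show "(\<lambda>p. G (fst p) (snd p)) \<in> borel_measurable (lborel \<Otimes>\<^sub>M lborel)"
      unfolding G_def by measurable
    show "norm (G v w) \<le> fV v * gE e w" for v w
      using gE_pos[of e w] fVp[of v] by (simp add: G_def norm_mult)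
    show "integrable lborel fV" by (rule fVi)
    show "integrable lborel (gE e :: real^'n \<Rightarrow> real)" using e by (rule gE_integrable)
    show "gE e w \<ge> 0" for w :: "real^'n" using gE_pos[of e w] by simp
  qed (auto intro: lborel.sigma_finite_measure_axioms fVp)
  also have "\<dots> = (\<integral>w. cis (w \<bullet> u) * cis (- (w \<bullet> a)) * complex_of_real (gE e w) * charf PV (- w) \<partial>lborel)"
  proof (intro Bochner_Integration.integral_cong refl)
    fix w :: "real^'n"
    have "G v w = (cis (w \<bullet> u) * cis (- (w \<bullet> a)) * complex_of_real (gE e w)) * (complex_of_real (fV v) * cis ((- w) \<bullet> v))" for v
    proof -
      have "cis (w \<bullet> (u - v - a)) = cis (w \<bullet> u) * cis (- (w \<bullet> a)) * cis ((- w) \<bullet> v)"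
        by (simp add: cis_mult inner_diff_right algebra_simps)
      then show ?thesis by (simp add: G_def mult_ac)
    qed
    then show "(\<integral>v. G v w \<partial>lborel) = cis (w \<bullet> u) * cis (- (w \<bullet> a)) * complex_of_real (gE e w) * charf PV (- w)"
      by (simp add: charf_density)
  qed
  also have "c * (\<integral>w. cis (w \<bullet> u) * cis (- (w \<bullet> a)) * complex_of_real (gE e w) * charf PV (- w) \<partial>lborel)
      = (\<integral>w. cis (w \<bullet> u) * qf e a w \<partial>lborel)"
    by (simp only: integral_mult_right_zero[symmetric]) (simp add: qf_def c_def mult_ac)
  finally have "complex_of_real (\<integral>v. fV v * Kf e a (u - v) \<partial>lborel) = (\<integral>w. cis (w \<bullet> u) * qf e a w \<partial>lborel)" .
  then have "(\<integral>v. fV v * Kf e a (u - v) \<partial>lborel) = Re (\<integral>w. cis (w \<bullet> u) * qf e a w \<partial>lborel)"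
    by (metis Re_complex_of_real)
  also have "\<dots> = (\<integral>w. Re (cis (w \<bullet> u) * qf e a w) \<partial>lborel)"
    by (rule integral_Re[OF qf_int[OF e], symmetric])
  finally show ?thesis using r by simp
qed

lemma fin_K: assumes e: "e > 0"
  shows "fin_signed (density lborel (\<lambda>x. ennreal (Kf e a x))) (null_measure borel)"
proof -
  have "integrable lborel (Kf e a)" using e by (rule Kf_integrable)
  then have "(\<integral>\<^sup>+x. ennreal (norm (Kf e a x)) \<partial>lborel) < \<infinity>"
    by (simp add: integrable_iff_bounded)
  then have "(\<integral>\<^sup>+x. ennreal (Kf e a x) \<partial>lborel) < \<infinity>"
    using Kf_pos[of e a] by (simp add: abs_of_pos)
  then have "finite_measure (density lborel (\<lambda>x. ennreal (Kf e a x)))"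
    by (intro finite_measureI) (simp add: emeasure_density)
  then show ?thesis unfolding fin_signed_def by (simp add: fin_null)
qed

lemma conv_K:
  assumes [measurable]: "h \<in> borel_measurable borel"
  shows "conv_signed h (density lborel (\<lambda>x. ennreal (Kf e a x))) (null_measure borel) u
     = (\<integral>x. h (u - x) * Kf e a x \<partial>lborel)"
  unfolding conv_signed_def sint_def
  by (subst integral_density) (auto simp: less_imp_le[OF Kf_pos] mult.commute)

lemma good_cont: "length js \<le> k \<Longrightarrow> continuous_on UNIV (iter_partial js fV)"
  using fVg by (simp add: good_def)

lemma good_bdd: "length js \<le> k \<Longrightarrow> bounded (range (iter_partial js fV))"
  using fVg by (simp add: good_def)

lemma Pq_dom: assumes e: "e > 0"
  shows "integrable lborel (\<lambda>w. (1 + norm w)^k * norm (qf e a w))"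
proof (rule Bochner_Integration.integrable_bound[where f="\<lambda>w. (e / sqrt (2*pi))^CARD('n) * ((1 + norm w)^k * gE e w)"])
  show "integrable lborel (\<lambda>w. (e / sqrt (2*pi))^CARD('n) * ((1 + norm w)^k * gE e (w::real^'n)))"
    using gE_moment_integrable[OF e, where 'a="real^'n" and k=k] by simp
  have "(1 + norm w)^k * norm (qf e a w) \<le> (1 + norm w)^k * ((e / sqrt (2*pi))^CARD('n) * gE e w)" for w
    by (intro mult_left_mono qf_norm[OF e]) auto
  then show "AE w in lborel. norm ((1 + norm w)^k * norm (qf e a w)) \<le> norm ((e / sqrt (2*pi))^CARD('n) * ((1 + norm w)^k * gE e w))"
    using e by (intro AE_I2) (simp add: abs_mult mult_ac abs_of_pos gE_pos)
qed measurable

lemma Dconv: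
  assumes e: "e > 0" and al: "\<alpha> \<in> multi_indices k"
  shows "(\<integral>x. mderiv \<alpha> fV (u - x) * Kf e a x \<partial>lborel) = (\<integral>w. Re (cis (w \<bullet> u) * i_omega_pow \<alpha> w * qf e a w) \<partial>lborel)"
proof -
  let ?N = "density lborel (\<lambda>x. ennreal (Kf e a x))" and ?Z = "null_measure (borel :: (real^'n) measure)"
  have len: "length (mlist \<alpha>) \<le> k" using al by (rule length_mlist_le)
  have ci: "iter_partial (mlist \<alpha>) (conv_signed fV ?N ?Z) = conv_signed (iter_partial (mlist \<alpha>) fV) ?N ?Z"
    by (rule conv_iter[OF fin_K[OF e] fVg len])
  have cs: "conv_signed fV ?N ?Z = (\<lambda>u. \<integral>w. Re (cis (w \<bullet> u) * qf e a w) \<partial>lborel)"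
    by (rule ext) (simp add: conv_K Psi[OF e])
  have fi: "iter_partial (mlist \<alpha>) (\<lambda>u. \<integral>w. Re (cis (w \<bullet> u) * qf e a w) \<partial>lborel) =
      (\<lambda>u. \<integral>w. Re (cis (w \<bullet> u) * plist (mlist \<alpha>) w * qf e a w) \<partial>lborel)"
    by (rule fourier_iter[OF qf_m Pq_dom[OF e] len])
  have m: "iter_partial (mlist \<alpha>) fV \<in> borel_measurable borel"
    by (rule borel_measurable_continuous_onI[OF good_cont[OF len]])
  have "(\<integral>x. mderiv \<alpha> fV (u - x) * Kf e a x \<partial>lborel) = conv_signed (iter_partial (mlist \<alpha>) fV) ?N ?Z u"
    by (simp add: conv_K[OF m] mderiv_mlist)
  also have "\<dots> = (\<integral>w. Re (cis (w \<bullet> u) * plist (mlist \<alpha>) w * qf e a w) \<partial>lborel)"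
    unfolding ci[symmetric] cs fi ..
  finally show ?thesis by (simp add: plist_mlist)
qed

lemma iop_norm: assumes al: "\<alpha> \<in> multi_indices k" shows "norm (i_omega_pow \<alpha> w) \<le> (1 + norm w)^k"
  using order_trans[OF plist_norm pow_le_one_plus[OF length_mlist_le[OF al]]] by (simp add: plist_mlist)

lemma Pq_int: assumes e: "e > 0" and al: "\<alpha> \<in> multi_indices k"
  shows "integrable lborel (\<lambda>w. cis (w \<bullet> u) * i_omega_pow \<alpha> w * qf e a w)"
proof (rule Bochner_Integration.integrable_bound[OF Pq_dom[OF e]])
  show "AE w in lborel. norm (cis (w \<bullet> u) * i_omega_pow \<alpha> w * qf e a w) \<le> norm ((1 + norm w)^k * norm (qf e a w))"
    using iop_norm[OF al] by (intro AE_I2) (simp add: norm_mult mult_right_mono)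
qed (simp add: i_omega_pow_def)

lemma mderiv_m[measurable]: assumes al: "\<alpha> \<in> multi_indices k" shows "mderiv \<alpha> fV \<in> borel_measurable borel"
  unfolding mderiv_mlist by (rule borel_measurable_continuous_onI[OF good_cont[OF length_mlist_le[OF al]]])

lemma iop_m[measurable]: "i_omega_pow \<alpha> \<in> borel_measurable borel"
  using plist_meas[of "mlist \<alpha>"] unfolding plist_mlist[abs_def] .

lemma T_single:
  assumes e: "e > 0" and al: "\<alpha> \<in> multi_indices k" and N: "finite_measure N" "sets N = sets borel"
  shows "(\<integral>x. (\<integral>u. mderiv \<alpha> fV (u - x) \<partial>N) * Kf e a x \<partial>lborel) =
      Re (\<integral>w. i_omega_pow \<alpha> w * qf e a w * (\<integral>u. cis (w \<bullet> u) \<partial>N) \<partial>lborel)"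
    and "integrable lborel (\<lambda>x. (\<integral>u. mderiv \<alpha> fV (u - x) \<partial>N) * Kf e a x)"
proof -
  interpret N: finite_measure N by fact
  have len: "length (mlist \<alpha>) \<le> k" using al by (rule length_mlist_le)
  obtain BD where BD: "\<And>x. \<bar>mderiv \<alpha> fV x\<bar> \<le> BD"
    using bounded_range_abs[OF good_bdd[OF len]] unfolding mderiv_mlist by blast
  have BD0: "BD \<ge> 0" using BD[of 0] by simp
  note mderiv_m[OF al, measurable]
  have F1m: "(\<lambda>p. mderiv \<alpha> fV (snd p - fst p) * Kf e a (fst p)) \<in> borel_measurable (lborel \<Otimes>\<^sub>M N)"
    unfolding meas_pair_borel[OF sets_lborel N(2)] by measurable
  have F1a: "(\<integral>x. (\<integral>u. mderiv \<alpha> fV (u - x) * Kf e a x \<partial>N) \<partial>lborel) = (\<integral>u. (\<integral>x. mderiv \<alpha> fV (u - x) * Kf e a x \<partial>lborel) \<partial>N)"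
    by (rule fubini_bound(1)[where gA="\<lambda>x. BD * Kf e a x" and gB="\<lambda>_. 1"],
        auto intro: lborel.sigma_finite_measure_axioms N.sigma_finite_measure_axioms F1m
             simp: abs_mult BD less_imp_le[OF Kf_pos] BD0 Kf_integrable[OF e] abs_of_pos[OF Kf_pos] mult_right_mono)
  have F1b: "integrable lborel (\<lambda>x. \<integral>u. mderiv \<alpha> fV (u - x) * Kf e a x \<partial>N)"
    by (rule fubini_bound(2)[where gA="\<lambda>x. BD * Kf e a x" and gB="\<lambda>_. 1"],
        auto intro: lborel.sigma_finite_measure_axioms N.sigma_finite_measure_axioms F1m
             simp: abs_mult BD less_imp_le[OF Kf_pos] BD0 Kf_integrable[OF e] abs_of_pos[OF Kf_pos] mult_right_mono)
  have eqf: "(\<lambda>x. \<integral>u. mderiv \<alpha> fV (u - x) * Kf e a x \<partial>N) = (\<lambda>x. (\<integral>u. mderiv \<alpha> fV (u - x) \<partial>N) * Kf e a x)"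
    by (rule ext) (rule integral_mult_left_zero)
  show "integrable lborel (\<lambda>x. (\<integral>u. mderiv \<alpha> fV (u - x) \<partial>N) * Kf e a x)"
    using F1b unfolding eqf .
  define Z where "Z u = (\<integral>w. cis (w \<bullet> u) * i_omega_pow \<alpha> w * qf e a w \<partial>lborel)" for u
  have W: "(\<integral>x. mderiv \<alpha> fV (u - x) * Kf e a x \<partial>lborel) = Re (Z u)" for u
    unfolding Dconv[OF e al] Z_def by (rule integral_Re[OF Pq_int[OF e al]])
  have F2m: "(\<lambda>p. cis (snd p \<bullet> fst p) * i_omega_pow \<alpha> (snd p) * qf e a (snd p)) \<in> borel_measurable (N \<Otimes>\<^sub>M lborel)"
    unfolding meas_pair_borel[OF N(2) sets_lborel]
    using measurable_compose[OF measurable_snd qf_m] measurable_compose[OF measurable_snd iop_m] by measurable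
  have F2: "(\<integral>u. (\<integral>w. cis (w \<bullet> u) * i_omega_pow \<alpha> w * qf e a w \<partial>lborel) \<partial>N) =
       (\<integral>w. (\<integral>u. cis (w \<bullet> u) * i_omega_pow \<alpha> w * qf e a w \<partial>N) \<partial>lborel)"
     "integrable N (\<lambda>u. \<integral>w. cis (w \<bullet> u) * i_omega_pow \<alpha> w * qf e a w \<partial>lborel)"
    by (rule fubini_bound[where gA="\<lambda>_. 1" and gB="\<lambda>w. (1 + norm w)^k * norm (qf e a w)"],
        auto intro: lborel.sigma_finite_measure_axioms N.sigma_finite_measure_axioms F2m Pq_dom[OF e]
             simp: norm_mult iop_norm[OF al] mult_right_mono)+
  have "(\<integral>x. (\<integral>u. mderiv \<alpha> fV (u - x) \<partial>N) * Kf e a x \<partial>lborel) = (\<integral>x. (\<integral>u. mderiv \<alpha> fV (u - x) * Kf e a x \<partial>N) \<partial>lborel)"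
    by simp
  also have "\<dots> = (\<integral>u. Re (Z u) \<partial>N)" unfolding F1a W ..
  also have "\<dots> = Re (\<integral>u. Z u \<partial>N)"
    using F2(2) unfolding Z_def by (rule integral_Re)
  also have "(\<integral>u. Z u \<partial>N) = (\<integral>w. i_omega_pow \<alpha> w * qf e a w * (\<integral>u. cis (w \<bullet> u) \<partial>N) \<partial>lborel)"
    unfolding Z_def F2(1) by (intro Bochner_Integration.integral_cong refl) (simp add: mult_ac)
  finally show "(\<integral>x. (\<integral>u. mderiv \<alpha> fV (u - x) \<partial>N) * Kf e a x \<partial>lborel) =
      Re (\<integral>w. i_omega_pow \<alpha> w * qf e a w * (\<integral>u. cis (w \<bullet> u) \<partial>N) \<partial>lborel)" .
qed

definition Sf where "Sf \<alpha> x = sint (Mp \<alpha>) (Mn \<alpha>) (\<lambda>u. mderiv \<alpha> fV (u - x))"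

lemma Pqch_int:
  assumes e: "e > 0" and al: "\<alpha> \<in> multi_indices k" and N: "finite_measure N" "sets N = sets borel"
  shows "integrable lborel (\<lambda>w. i_omega_pow \<alpha> w * qf e a w * (\<integral>u. cis (w \<bullet> u) \<partial>N))"
proof -
  interpret N: finite_measure N by fact
  have cm: "(\<lambda>w. \<integral>u. cis (w \<bullet> u) \<partial>N) \<in> borel_measurable borel"
    by (rule charf_meas[OF N.sigma_finite_measure_axioms N(2)])
  have nb: "norm (\<integral>u. cis (w \<bullet> u) \<partial>N) \<le> measure N (space N)" for w
    using integral_norm_bound[of N "\<lambda>u. cis (w \<bullet> u)"] by simp
  show ?thesis
  proof (rule Bochner_Integration.integrable_bound[where f="\<lambda>w. measure N (space N) * ((1 + norm w)^k * norm (qf e a w))"])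
    show "integrable lborel (\<lambda>w. measure N (space N) * ((1 + norm w)^k * norm (qf e a w)))"
      using Pq_dom[OF e] by simp
    show "(\<lambda>w. i_omega_pow \<alpha> w * qf e a w * (\<integral>u. cis (w \<bullet> u) \<partial>N)) \<in> borel_measurable lborel"
      using cm by measurable
    have "norm (i_omega_pow \<alpha> w * qf e a w * (\<integral>u. cis (w \<bullet> u) \<partial>N)) \<le> (1 + norm w)^k * norm (qf e a w) * measure N (space N)" for w
      unfolding norm_mult by (intro mult_mono iop_norm[OF al] nb mult_right_mono) auto
    then show "AE w in lborel. norm (i_omega_pow \<alpha> w * qf e a w * (\<integral>u. cis (w \<bullet> u) \<partial>N)) \<le>
        norm (measure N (space N) * ((1 + norm w)^k * norm (qf e a w)))"
      by (intro AE_I2) (simp add: mult_ac)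
  qed
qed

lemma Ms_unf: assumes "\<alpha> \<in> multi_indices k"
  shows "finite_measure (Mp \<alpha>)" "sets (Mp \<alpha>) = sets borel" "finite_measure (Mn \<alpha>)" "sets (Mn \<alpha>) = sets borel"
  using Ms[OF assms] by (auto simp: fin_signed_def)

lemma S_K:
  assumes e: "e > 0" and al: "\<alpha> \<in> multi_indices k"
  shows "(\<integral>x. Sf \<alpha> x * Kf e a x \<partial>lborel) = Re (\<integral>w. i_omega_pow \<alpha> w * qf e a w * schar (Mp \<alpha>) (Mn \<alpha>) w \<partial>lborel)"
    and "integrable lborel (\<lambda>x. Sf \<alpha> x * Kf e a x)"
proof -
  note Tp = T_single[OF e al Ms_unf(1,2)[OF al], of a] and Tn = T_single[OF e al Ms_unf(3,4)[OF al], of a]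
  have eq: "Sf \<alpha> x * Kf e a x = (\<integral>u. mderiv \<alpha> fV (u - x) \<partial>Mp \<alpha>) * Kf e a x - (\<integral>u. mderiv \<alpha> fV (u - x) \<partial>Mn \<alpha>) * Kf e a x" for x
    by (simp add: Sf_def sint_def algebra_simps)
  show "integrable lborel (\<lambda>x. Sf \<alpha> x * Kf e a x)"
    unfolding eq using Tp(2) Tn(2) by (rule Bochner_Integration.integrable_diff)
  have "(\<integral>x. Sf \<alpha> x * Kf e a x \<partial>lborel) =
     Re (\<integral>w. i_omega_pow \<alpha> w * qf e a w * (\<integral>u. cis (w \<bullet> u) \<partial>Mp \<alpha>) \<partial>lborel) -
     Re (\<integral>w. i_omega_pow \<alpha> w * qf e a w * (\<integral>u. cis (w \<bullet> u) \<partial>Mn \<alpha>) \<partial>lborel)"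
    unfolding eq Bochner_Integration.integral_diff[OF Tp(2) Tn(2)] Tp(1) Tn(1) ..
  also have "\<dots> = Re ((\<integral>w. i_omega_pow \<alpha> w * qf e a w * (\<integral>u. cis (w \<bullet> u) \<partial>Mp \<alpha>) \<partial>lborel) -
     (\<integral>w. i_omega_pow \<alpha> w * qf e a w * (\<integral>u. cis (w \<bullet> u) \<partial>Mn \<alpha>) \<partial>lborel))" by simp
  also have "(\<integral>w. i_omega_pow \<alpha> w * qf e a w * (\<integral>u. cis (w \<bullet> u) \<partial>Mp \<alpha>) \<partial>lborel) -
     (\<integral>w. i_omega_pow \<alpha> w * qf e a w * (\<integral>u. cis (w \<bullet> u) \<partial>Mn \<alpha>) \<partial>lborel) =
     (\<integral>w. i_omega_pow \<alpha> w * qf e a w * schar (Mp \<alpha>) (Mn \<alpha>) w \<partial>lborel)"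
    unfolding Bochner_Integration.integral_diff[OF Pqch_int[OF e al Ms_unf(1,2)[OF al]] Pqch_int[OF e al Ms_unf(3,4)[OF al]], symmetric]
    by (simp add: schar_def algebra_simps)
  finally show "(\<integral>x. Sf \<alpha> x * Kf e a x \<partial>lborel) = Re (\<integral>w. i_omega_pow \<alpha> w * qf e a w * schar (Mp \<alpha>) (Mn \<alpha>) w \<partial>lborel)" .
qed

lemma Pqs_int: assumes e: "e > 0" and al: "\<alpha> \<in> multi_indices k"
  shows "integrable lborel (\<lambda>w. i_omega_pow \<alpha> w * qf e a w * schar (Mp \<alpha>) (Mn \<alpha>) w)"
proof -
  have "integrable lborel (\<lambda>w. i_omega_pow \<alpha> w * qf e a w * (\<integral>u. cis (w \<bullet> u) \<partial>Mp \<alpha>) - i_omega_pow \<alpha> w * qf e a w * (\<integral>u. cis (w \<bullet> u) \<partial>Mn \<alpha>))"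
    by (intro Bochner_Integration.integrable_diff Pqch_int[OF e al] Ms_unf[OF al])
  then show ?thesis by (simp add: schar_def algebra_simps)
qed

lemma main_eq:
  assumes e: "e > 0"
  shows "(\<integral>x. L x * Kf e a x \<partial>lborel) = (\<Sum>\<alpha>\<in>multi_indices k. \<integral>x. Sf \<alpha> x * Kf e a x \<partial>lborel)"
proof -
  define c where "c = complex_of_real ((e / sqrt (2*pi))^CARD('n))"
  have "(\<Sum>\<alpha>\<in>multi_indices k. \<integral>x. Sf \<alpha> x * Kf e a x \<partial>lborel) =
     (\<Sum>\<alpha>\<in>multi_indices k. Re (\<integral>w. i_omega_pow \<alpha> w * qf e a w * schar (Mp \<alpha>) (Mn \<alpha>) w \<partial>lborel))"
    by (intro sum.cong refl S_K(1)[OF e])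
  also have "\<dots> = Re (\<Sum>\<alpha>\<in>multi_indices k. (\<integral>w. i_omega_pow \<alpha> w * qf e a w * schar (Mp \<alpha>) (Mn \<alpha>) w \<partial>lborel))"
    by simp
  also have "(\<Sum>\<alpha>\<in>multi_indices k. (\<integral>w. i_omega_pow \<alpha> w * qf e a w * schar (Mp \<alpha>) (Mn \<alpha>) w \<partial>lborel)) =
      (\<integral>w. (\<Sum>\<alpha>\<in>multi_indices k. i_omega_pow \<alpha> w * qf e a w * schar (Mp \<alpha>) (Mn \<alpha>) w) \<partial>lborel)"
    by (rule Bochner_Integration.integral_sum[symmetric]) (rule Pqs_int[OF e])
  also have "\<dots> = (\<integral>w. c * (cis (- (w \<bullet> a)) * complex_of_real (gE e w) * FT w) \<partial>lborel)"
  proof (rule integral_cong_AE)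
    show "(\<lambda>w. \<Sum>\<alpha>\<in>multi_indices k. i_omega_pow \<alpha> w * qf e a w * schar (Mp \<alpha>) (Mn \<alpha>) w) \<in> borel_measurable lborel"
      using Pqs_int[OF e] by (intro borel_measurable_sum) (rule borel_measurable_integrable)
    show "(\<lambda>w. c * (cis (- (w \<bullet> a)) * complex_of_real (gE e w) * FT w)) \<in> borel_measurable lborel"
      by measurable
    show "AE w in lborel. (\<Sum>\<alpha>\<in>multi_indices k. i_omega_pow \<alpha> w * qf e a w * schar (Mp \<alpha>) (Mn \<alpha>) w) =
        c * (cis (- (w \<bullet> a)) * complex_of_real (gE e w) * FT w)"
      using AEphi AEQ
    proof eventually_elim
      case (elim w)
      have "(\<Sum>\<alpha>\<in>multi_indices k. i_omega_pow \<alpha> w * qf e a w * schar (Mp \<alpha>) (Mn \<alpha>) w) =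
          qf e a w * (\<Sum>\<alpha>\<in>multi_indices k. i_omega_pow \<alpha> w * schar (Mp \<alpha>) (Mn \<alpha>) w)"
        by (simp add: sum_distrib_left mult_ac)
      also have "\<dots> = qf e a w * (FT w / charf PV (- w))"
        using elim by (simp add: FT_def)
      also have "\<dots> = c * (cis (- (w \<bullet> a)) * complex_of_real (gE e w) * FT w)"
        using elim(1) by (simp add: qf_def c_def field_simps)
      finally show ?case .
    qed
  qed
  also have "\<dots> = c * (\<integral>w. cis (- (w \<bullet> a)) * complex_of_real (gE e w) * FT w \<partial>lborel)" by simp
  also have "\<dots> = complex_of_real (\<integral>x. L x * Kf e a x \<partial>lborel)"
    unfolding c_def I_lam[OF e] ..
  finally show ?thesis by simp
qed

lemma LK_int: assumes e: "e > 0" shows "integrable lborel (\<lambda>x. L x * Kf e a x)"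
proof -
  obtain B where B: "\<And>x. \<bar>L x\<bar> \<le> B" using LB by blast
  show ?thesis
  proof (rule Bochner_Integration.integrable_bound[where f="\<lambda>x. B * Kf e a x"])
    show "integrable lborel (\<lambda>x. B * Kf e a x)" by (rule integrable_mult_right[OF Kf_integrable[OF e]])
    show "AE x in lborel. norm (L x * Kf e a x) \<le> norm (B * Kf e a x)"
      using B Kf_pos[of e a] by (intro AE_I2) (simp add: abs_mult mult_right_mono abs_of_pos order_trans[OF _ abs_ge_self])
  qed measurable
qed

lemma zero_eq:
  assumes e: "e > 0"
  shows "(\<integral>x. (L x - (\<Sum>\<alpha>\<in>multi_indices k. Sf \<alpha> x)) * Kf e a x \<partial>lborel) = 0"
proof -
  have "(\<integral>x. (L x - (\<Sum>\<alpha>\<in>multi_indices k. Sf \<alpha> x)) * Kf e a x \<partial>lborel) =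
     (\<integral>x. L x * Kf e a x - (\<Sum>\<alpha>\<in>multi_indices k. Sf \<alpha> x * Kf e a x) \<partial>lborel)"
    by (simp add: algebra_simps sum_distrib_left)
  also have "\<dots> = (\<integral>x. L x * Kf e a x \<partial>lborel) - (\<Sum>\<alpha>\<in>multi_indices k. \<integral>x. Sf \<alpha> x * Kf e a x \<partial>lborel)"
    by (subst Bochner_Integration.integral_diff)
       (auto intro!: LK_int[OF e] Bochner_Integration.integral_sum S_K(2)[OF e])
  finally show ?thesis using main_eq[OF e] by simp
qed

lemma Sf_cont_bdd:
  assumes al: "\<alpha> \<in> multi_indices k"
  shows "continuous_on UNIV (Sf \<alpha>)" and "\<exists>B. \<forall>x. \<bar>Sf \<alpha> x\<bar> \<le> B"
proof -
  have len: "length (mlist \<alpha>) \<le> k" using al by (rule length_mlist_le)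
  have c: "continuous_on UNIV (mderiv \<alpha> fV)" and b: "bounded (range (mderiv \<alpha> fV))"
    unfolding mderiv_mlist using good_cont[OF len] good_bdd[OF len] by auto
  obtain BD where BD: "\<And>x. \<bar>mderiv \<alpha> fV x\<bar> \<le> BD" using bounded_range_abs[OF b] by blast
  note M = Ms_unf[OF al]
  show "continuous_on UNIV (Sf \<alpha>)"
    unfolding Sf_def[abs_def] sint_def
    by (intro continuous_on_diff cont_conv[OF M(1,2) c b] cont_conv[OF M(3,4) c b])
  have "\<bar>Sf \<alpha> x\<bar> \<le> BD * measure (Mp \<alpha>) (space (Mp \<alpha>)) + BD * measure (Mn \<alpha>) (space (Mn \<alpha>))" for x
    using conv_bound[OF M(1,2) c BD, of x] conv_bound[OF M(3,4) c BD, of x]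
    unfolding Sf_def sint_def by linarith
  then show "\<exists>B. \<forall>x. \<bar>Sf \<alpha> x\<bar> \<le> B" by blast
qed

lemma pointwise: "L a = (\<Sum>\<alpha>\<in>multi_indices k. Sf \<alpha> a)"
proof -
  define h where "h x = L x - (\<Sum>\<alpha>\<in>multi_indices k. Sf \<alpha> x)" for x
  have hc: "continuous_on UNIV h"
    unfolding h_def[abs_def] using Lc Sf_cont_bdd(1)
    by (intro continuous_on_diff continuous_on_sum) auto
  obtain BL where BL: "\<And>x. \<bar>L x\<bar> \<le> BL" using LB by blast
  have "\<forall>\<alpha>\<in>multi_indices k. \<exists>B. \<forall>x. \<bar>Sf \<alpha> x\<bar> \<le> B" using Sf_cont_bdd(2) by blast
  then obtain Bf where Bf: "\<And>\<alpha> x. \<alpha> \<in> multi_indices k \<Longrightarrow> \<bar>Sf \<alpha> x\<bar> \<le> Bf \<alpha>"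
    by metis
  have hb: "\<bar>h x\<bar> \<le> BL + (\<Sum>\<alpha>\<in>multi_indices k. Bf \<alpha>)" for x
  proof -
    have "\<bar>\<Sum>\<alpha>\<in>multi_indices k. Sf \<alpha> x\<bar> \<le> (\<Sum>\<alpha>\<in>multi_indices k. \<bar>Sf \<alpha> x\<bar>)" by (rule sum_abs)
    also have "\<dots> \<le> (\<Sum>\<alpha>\<in>multi_indices k. Bf \<alpha>)" by (intro sum_mono Bf)
    finally show ?thesis using BL[of x] unfolding h_def by linarith
  qed
  have "h a = 0"
  proof (rule approx_zero[OF hc hb])
    fix e :: real assume e: "e > 0"
    show "(\<integral>x. h x * Kf e a x \<partial>lborel) = 0" unfolding h_def by (rule zero_eq[OF e])
  qed
  then show ?thesis by (simp add: h_def)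
qed

lemma pointwise2: "L a = (\<Sum>\<alpha>\<in>multi_indices k. sint (Mp \<alpha>) (Mn \<alpha>) (\<lambda>u. mderiv \<alpha> fV (u - a)))"
  using pointwise[of a] by (simp add: Sf_def)

end


lemma swap1:
  fixes \<phi> :: "real^'n::finite \<Rightarrow> real"
  assumes A: "finite_measure A" "sets A = sets borel" and B: "finite_measure B" "sets B = sets borel"
    and c: "continuous_on UNIV \<phi>" and b: "bounded (range \<phi>)"
  shows "(\<integral>u. (\<integral>x. \<phi> (u - x) \<partial>B) \<partial>A) = (\<integral>x. (\<integral>u. \<phi> (u - x) \<partial>A) \<partial>B)"
    and "integrable A (\<lambda>u. \<integral>x. \<phi> (u - x) \<partial>B)"
    and "integrable B (\<lambda>x. \<integral>u. \<phi> (u - x) \<partial>A)"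
proof -
  interpret A: finite_measure A by fact
  interpret B: finite_measure B by fact
  obtain C where C: "\<And>x. \<bar>\<phi> x\<bar> \<le> C" using bounded_range_abs[OF b] by blast
  have C0: "C \<ge> 0" using C[of 0] by simp
  have [measurable]: "\<phi> \<in> borel_measurable borel" by (rule borel_measurable_continuous_onI[OF c])
  have m: "(\<lambda>p. \<phi> (fst p - snd p)) \<in> borel_measurable (A \<Otimes>\<^sub>M B)"
    unfolding meas_pair_borel[OF A(2) B(2)] by measurable
  note fb = fubini_bound[where f="\<lambda>u x. \<phi> (u - x)" and gA="\<lambda>_. C" and gB="\<lambda>_. 1",
     OF A.sigma_finite_measure_axioms B.sigma_finite_measure_axioms]
  show "(\<integral>u. (\<integral>x. \<phi> (u - x) \<partial>B) \<partial>A) = (\<integral>x. (\<integral>u. \<phi> (u - x) \<partial>A) \<partial>B)"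
    by (rule fb(1)) (use m C C0 in auto)
  show "integrable A (\<lambda>u. \<integral>x. \<phi> (u - x) \<partial>B)"
    by (rule fb(2)) (use m C C0 in auto)
  show "integrable B (\<lambda>x. \<integral>u. \<phi> (u - x) \<partial>A)"
    by (rule fb(3)) (use m C C0 in auto)
qed

lemma swap_signed:
  fixes \<phi> :: "real^'n::finite \<Rightarrow> real"
  assumes A: "fin_signed A1 A2" and B: "fin_signed B1 B2"
    and c: "continuous_on UNIV \<phi>" and b: "bounded (range \<phi>)"
  shows "sint A1 A2 (\<lambda>u. sint B1 B2 (\<lambda>x. \<phi> (u - x))) = sint B1 B2 (\<lambda>x. sint A1 A2 (\<lambda>u. \<phi> (u - x)))"
proof -
  have A1: "finite_measure A1" "sets A1 = sets borel" and A2: "finite_measure A2" "sets A2 = sets borel"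
    and B1: "finite_measure B1" "sets B1 = sets borel" and B2: "finite_measure B2" "sets B2 = sets borel"
    using A B by (auto simp: fin_signed_def)
  note s11 = swap1[OF A1 B1 c b] and s12 = swap1[OF A1 B2 c b]
    and s21 = swap1[OF A2 B1 c b] and s22 = swap1[OF A2 B2 c b]
  show ?thesis
    unfolding sint_def
    by (simp add: Bochner_Integration.integral_diff s11 s12 s21 s22)
qed

lemma lborel_uminus: "lborel = distr lborel borel (\<lambda>v::'a::euclidean_space. - v)"
proof -
  have L0: "lborel = distr lborel borel (\<lambda>x::'a. \<Sum>j\<in>Basis. - ((x \<bullet> j) *\<^sub>R j))"
    using lborel_affine_euclidean[where c="\<lambda>_. -1" and t="0::'a"] by (simp add: density_1)
  have eq: "(\<lambda>x::'a. \<Sum>j\<in>Basis. - ((x \<bullet> j) *\<^sub>R j)) = (\<lambda>v. - v)"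
    by (rule ext) (simp add: sum_negf euclidean_representation)
  show ?thesis using L0 unfolding eq .
qed

lemma AE_reflect:
  assumes "AE w in (lborel::'a::euclidean_space measure). P w"
  shows "AE w in lborel. P (- w)"
proof -
  have "AE w in distr lborel borel (\<lambda>v::'a. - v). P w"
    by (subst lborel_uminus[symmetric]) (rule assms)
  then show ?thesis by (rule AE_distrD[rotated]) simp
qed


theorem proposition4:
  fixes M :: "'a measure"
    and X V :: "'a \<Rightarrow> real^'n::finite"
    and y :: "real^'n" and k :: nat
    and g fV :: "real^'n \<Rightarrow> real"
    and Mp Mn :: "'n multi_index \<Rightarrow> (real^'n) measure"
  assumes "prob_space M"
    and "g \<in> borel_measurable borel"
    and "X \<in> borel_measurable M" and "V \<in> borel_measurable M"
    and "prob_space.indep_var M borel X borel V"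
    and "distributed M lborel V (\<lambda>v. ennreal (fV v))"
    and "\<forall>v. fV v \<ge> 0"
    and "C0k k fV"
    and "AE \<omega> in lborel. charf (distr M borel V) \<omega> \<noteq> 0"
    and "continuous_on UNIV (lam g fV y)"
    and "(lam g fV y \<longlongrightarrow> 0) at_infinity"
    and "integrable lborel (lam g fV y)"
    and "integrable lborel (fourier (\<lambda>x. complex_of_real (lam g fV y x)))"
    and "\<forall>\<alpha>\<in>multi_indices k. fin_signed (Mp \<alpha>) (Mn \<alpha>)"
    and "AE \<omega> in lborel. Qfun g fV (distr M borel V) y \<omega> =
           (\<Sum>\<alpha>\<in>multi_indices k. i_omega_pow \<alpha> \<omega> * schar (Mp \<alpha>) (Mn \<alpha>) \<omega>)"
  shows "(\<forall>Np Nn. fin_signed Np Nn \<longrightarrow>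
            sint Np Nn (lam g fV y) =
            (\<Sum>\<alpha>\<in>multi_indices k. sint (Mp \<alpha>) (Mn \<alpha>) (mderiv \<alpha> (conv_signed fV Np Nn))))
       \<and> (conv_meas fV (distr M borel X) y > 0 \<longrightarrow>
            cond_exp_at g fV (distr M borel X) y =
            (\<Sum>\<alpha>\<in>multi_indices k. sint (Mp \<alpha>) (Mn \<alpha>)
                 (mderiv \<alpha> (conv_meas fV (distr M borel X)))) / conv_meas fV (distr M borel X) y)"
proof -
  note A = assms
  interpret P: prob_space M by (rule A(1))
  let ?L = "lam g fV y" and ?PV = "distr M borel V"
  have fVc: "continuous_on UNIV fV"
    using A(8) unfolding C0k_def by (metis iter_partial.simps(1) le0 list.size(3))
  have fVp: "\<And>v. fV v \<ge> 0" using A(7) by simp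
  have fVi: "integrable lborel fV"
  proof -
    have "integrable lborel (\<lambda>x. fV x * 1) \<longleftrightarrow> integrable M (\<lambda>x. (1::real))"
      by (rule distributed_integrable[OF A(6)]) (auto simp: fVp)
    then show ?thesis by simp
  qed
  have fVg: "good k fV" by (rule C0k_good[OF A(8)])
  have PVeq: "?PV = density lborel (\<lambda>v. ennreal (fV v))"
  proof -
    have "?PV = distr M lborel V" by (rule distr_cong) auto
    also have "\<dots> = density lborel (\<lambda>v. ennreal (fV v))"
      by (rule distributed_distr_eq_density[OF A(6)])
    finally show ?thesis .
  qed
  have PVp: "prob_space ?PV" by (rule P.prob_space_distr) (use A(4) in simp)
  have Lb: "bounded (range ?L)" by (rule cont_vanish_bounded[OF A(10) A(11)])
  have Ms: "\<And>\<alpha>. \<alpha> \<in> multi_indices k \<Longrightarrow> fin_signed (Mp \<alpha>) (Mn \<alpha>)" using A(14) by blast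
  have AEphi: "AE w in lborel. charf ?PV (- w) \<noteq> 0"
    by (rule AE_reflect[OF A(9)])
  have AEQ: "AE w in lborel. (if charf ?PV (- w) \<noteq> 0 then fourier (\<lambda>x. complex_of_real (?L x)) w / charf ?PV (- w) else 0)
         = (\<Sum>\<alpha>\<in>multi_indices k. i_omega_pow \<alpha> w * schar (Mp \<alpha>) (Mn \<alpha>) w)"
    using A(15) by (simp add: Qfun_def)
  note pw = pointwise2[OF fVc fVp fVi fVg PVeq PVp A(10) Lb A(12) Ms AEphi AEQ]
  have part1: "sint Np Nn ?L = (\<Sum>\<alpha>\<in>multi_indices k. sint (Mp \<alpha>) (Mn \<alpha>) (mderiv \<alpha> (conv_signed fV Np Nn)))"
    if N: "fin_signed Np Nn" for Np Nn
  proof -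
    have N1: "finite_measure Np" "sets Np = sets borel" and N2: "finite_measure Nn" "sets Nn = sets borel"
      using N by (auto simp: fin_signed_def)
    have Dcb: "continuous_on UNIV (mderiv \<alpha> fV)" "bounded (range (mderiv \<alpha> fV))" if al: "\<alpha> \<in> multi_indices k" for \<alpha>
      using fVg length_mlist_le[OF al] unfolding good_def mderiv_mlist by auto
    define S where "S \<alpha> x = sint (Mp \<alpha>) (Mn \<alpha>) (\<lambda>u. mderiv \<alpha> fV (u - x))" for \<alpha> x
    have Sint: "integrable Np (S \<alpha>)" "integrable Nn (S \<alpha>)" if al: "\<alpha> \<in> multi_indices k" for \<alpha>
    proof -
      have Seq: "S \<alpha> = (\<lambda>x. (\<integral>u. mderiv \<alpha> fV (u - x) \<partial>Mp \<alpha>) - (\<integral>u. mderiv \<alpha> fV (u - x) \<partial>Mn \<alpha>))"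
        by (rule ext) (simp add: S_def sint_def)
      have MM: "finite_measure (Mp \<alpha>)" "sets (Mp \<alpha>) = sets borel" "finite_measure (Mn \<alpha>)" "sets (Mn \<alpha>) = sets borel"
        using Ms[OF al] by (auto simp: fin_signed_def)
      have "integrable Np (\<lambda>x. (\<integral>u. mderiv \<alpha> fV (u - x) \<partial>Mp \<alpha>) - (\<integral>u. mderiv \<alpha> fV (u - x) \<partial>Mn \<alpha>))"
        by (intro Bochner_Integration.integrable_diff swap1(3)[OF MM(1,2) N1 Dcb[OF al]] swap1(3)[OF MM(3,4) N1 Dcb[OF al]])
      then show "integrable Np (S \<alpha>)" unfolding Seq .
      have "integrable Nn (\<lambda>x. (\<integral>u. mderiv \<alpha> fV (u - x) \<partial>Mp \<alpha>) - (\<integral>u. mderiv \<alpha> fV (u - x) \<partial>Mn \<alpha>))"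
        by (intro Bochner_Integration.integrable_diff swap1(3)[OF MM(1,2) N2 Dcb[OF al]] swap1(3)[OF MM(3,4) N2 Dcb[OF al]])
      then show "integrable Nn (S \<alpha>)" unfolding Seq .
    qed
    have "sint Np Nn ?L = sint Np Nn (\<lambda>x. \<Sum>\<alpha>\<in>multi_indices k. S \<alpha> x)"
      unfolding S_def using pw by (simp add: sint_def)
    also have "\<dots> = (\<Sum>\<alpha>\<in>multi_indices k. sint Np Nn (S \<alpha>))"
      unfolding sint_def using Sint
      by (simp add: Bochner_Integration.integral_sum sum_subtractf)
    also have "\<dots> = (\<Sum>\<alpha>\<in>multi_indices k. sint (Mp \<alpha>) (Mn \<alpha>) (mderiv \<alpha> (conv_signed fV Np Nn)))"
    proof (rule sum.cong[OF refl])
      fix \<alpha> :: "'n multi_index" assume al: "\<alpha> \<in> multi_indices k"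
      have "mderiv \<alpha> (conv_signed fV Np Nn) = conv_signed (mderiv \<alpha> fV) Np Nn"
        unfolding mderiv_mlist by (rule conv_iter[OF N fVg length_mlist_le[OF al]])
      then have "sint (Mp \<alpha>) (Mn \<alpha>) (mderiv \<alpha> (conv_signed fV Np Nn)) =
          sint (Mp \<alpha>) (Mn \<alpha>) (\<lambda>u. sint Np Nn (\<lambda>x. mderiv \<alpha> fV (u - x)))"
        by (simp add: conv_signed_def[abs_def])
      also have "\<dots> = sint Np Nn (\<lambda>x. sint (Mp \<alpha>) (Mn \<alpha>) (\<lambda>u. mderiv \<alpha> fV (u - x)))"
        by (rule swap_signed[OF Ms[OF al] N Dcb[OF al]])
      finally show "sint Np Nn (S \<alpha>) = sint (Mp \<alpha>) (Mn \<alpha>) (mderiv \<alpha> (conv_signed fV Np Nn))"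
        by (simp add: S_def[abs_def])
    qed
    finally show ?thesis .
  qed
  have part2: "cond_exp_at g fV (distr M borel X) y =
      (\<Sum>\<alpha>\<in>multi_indices k. sint (Mp \<alpha>) (Mn \<alpha>) (mderiv \<alpha> (conv_meas fV (distr M borel X)))) / conv_meas fV (distr M borel X) y"
  proof -
    let ?PX = "distr M borel X" and ?Z = "null_measure (borel :: (real^'n) measure)"
    have PXp: "prob_space ?PX" by (rule P.prob_space_distr) (use A(3) in simp)
    interpret PX: prob_space ?PX by (rule PXp)
    have fs: "fin_signed ?PX ?Z"
      unfolding fin_signed_def using PX.finite_measure_axioms fin_null by auto
    have cm: "conv_meas fV ?PX = conv_signed fV ?PX ?Z"
      by (rule ext) (simp add: conv_meas_def conv_signed_def sint_def)
    have "(\<integral>x. g x * fV (y - x) \<partial>?PX) = sint ?PX ?Z ?L"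
      by (simp add: sint_def lam_def)
    then show ?thesis
      unfolding cond_exp_at_def cm using part1[OF fs] by simp
  qed
  show ?thesis using part1 part2 by blast
qed


end
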